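(* Let $k$ be sufficiently large, $r=2^k\ln 2-\frac{1+\ln 2}{2}-\epsilon_k$ with $\epsilon_k=\Theta_k(2^{-k/3})$, $M=\lceil rN\rceil$. Let $U$ be the set of variables removed by steps PR1–PR2 applied to $\Phi=\Phi_k(N,M)$. Then with probability $1-o(1)$ as $N\to\infty$, $|U|\le\exp(-k^3)N$.
   Context: $\Phi=\Phi_k(N,M)$ is the random $k$-CNF on $V=\{x_1,\dots,x_N\}$ with $M$ clauses, each of its $kM$ literals chosen independently and uniformly from $\{x_1,\neg x_1,\dots,x_N,\neg x_N\}$; $D_l$ is the number of occurrences of literal $l$. PR1: let $U$ be the set of variables $x$ with $\max\{|D_x-kr/2|,|D_{\neg x}-kr/2|\}>k^32^{k/2}$. PR2: while there is a clause at least three of whose literals have underlying variable in $U$, remove all such clauses from the formula and add to $U$ every variable $x$ such that in the reduced formula the degree of $x$ or of $\neg x$ differs from $kr/2$ by more than $k^32^{k/2}$. The set $U$ at termination is the set of removed variables. *)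

theory Defs
  imports "HOL-Probability.Probability" "HOL-Library.Landau_Symbols"
begin

text \<open>Variables are x_0,...,x_(N-1), represented by naturals < N.  A literal is a pair
  (x, s): s = True means the positive literal x, s = False means its negation.
  A k-CNF with M clauses is a map from positions (i, j), i < M (clause index),
  j < k (position within the clause), to literals.\<close>

type_synonym lit = "nat \<times> bool"
type_synonym cnf = "nat \<times> nat \<Rightarrow> lit"

definition lits :: "nat \<Rightarrow> lit set" where
  "lits N = {0..<N} \<times> UNIV"

definition formulas :: "nat \<Rightarrow> nat \<Rightarrow> nat \<Rightarrow> cnf set" where
  "formulas k N M = PiE ({0..<M} \<times> {0..<k}) (\<lambda>_. lits N)"

text \<open>The random formula Phi_k(N,M): all kM literals independent uniform.\<close>
definition random_formula :: "nat \<Rightarrow> nat \<Rightarrow> nat \<Rightarrow> cnf pmf" where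
  "random_formula k N M = pmf_of_set (formulas k N M)"

definition deg :: "nat \<Rightarrow> cnf \<Rightarrow> nat set \<Rightarrow> lit \<Rightarrow> nat" where
  "deg k \<Phi> C l = card {(i, j). i \<in> C \<and> j < k \<and> \<Phi> (i, j) = l}"

definition deviates :: "nat \<Rightarrow> real \<Rightarrow> cnf \<Rightarrow> nat set \<Rightarrow> nat \<Rightarrow> bool" where
  "deviates k r \<Phi> C x \<longleftrightarrow>
     max \<bar>real (deg k \<Phi> C (x, True)) - real k * r / 2\<bar>
         \<bar>real (deg k \<Phi> C (x, False)) - real k * r / 2\<bar>
       > real k ^ 3 * 2 powr (real k / 2)"

definition bad_vars :: "nat \<Rightarrow> real \<Rightarrow> nat \<Rightarrow> cnf \<Rightarrow> nat set \<Rightarrow> nat set" where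
  "bad_vars k r N \<Phi> C = {x \<in> {0..<N}. deviates k r \<Phi> C x}"

definition heavy :: "nat \<Rightarrow> cnf \<Rightarrow> nat set \<Rightarrow> nat set \<Rightarrow> nat set" where
  "heavy k \<Phi> U C = {i \<in> C. card {j. j < k \<and> fst (\<Phi> (i, j)) \<in> U} \<ge> 3}"

text \<open>One round of PR2, acting on (U, current set of clauses).\<close>
definition pr_step :: "nat \<Rightarrow> real \<Rightarrow> nat \<Rightarrow> cnf \<Rightarrow> nat set \<times> nat set \<Rightarrow> nat set \<times> nat set" where
  "pr_step k r N \<Phi> UC =
     (let U = fst UC; C = snd UC; B = heavy k \<Phi> U C in
      if B = {} then (U, C) else (U \<union> bad_vars k r N \<Phi> (C - B), C - B))"

text \<open>PR1 gives the initial U; PR2 is iterated until it stabilises.  Since U only grows,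
  the final U is the union over all iterates.\<close>
definition removed_vars :: "nat \<Rightarrow> real \<Rightarrow> nat \<Rightarrow> nat \<Rightarrow> cnf \<Rightarrow> nat set" where
  "removed_vars k r N M \<Phi> =
     (\<Union>n. fst ((pr_step k r N \<Phi> ^^ n) (bad_vars k r N \<Phi> {0..<M}, {0..<M})))"

end

theory Submission
  imports Defs "HOL-Real_Asymp.Real_Asymp"
begin


lemma pow_over_fact_le_exp:
  fixes x :: real assumes "0 \<le> x"
  shows "x ^ m / fact m \<le> exp x"
proof -
  have s: "(\<lambda>n. x^n /\<^sub>R fact n) sums exp x" by (rule exp_converges)
  have "(\<Sum>n\<in>{..<Suc m}. x^n /\<^sub>R fact n) \<le> exp x"
    using sum_le_suminf[OF sums_summable[OF s], of "{..<Suc m}"] s assms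
    by (simp add: sums_iff sum_nonneg)
  moreover have "x^m / fact m \<le> (\<Sum>n\<in>{..<Suc m}. x^n /\<^sub>R fact n)"
    using assms by (simp add: divide_inverse_commute sum_nonneg)
  ultimately show ?thesis by linarith
qed

lemma binom_bound:
  assumes "m > 0"
  shows "real (n choose m) \<le> (exp 1 * real n / real m) ^ m"
proof -
  have a: "real (n choose m) * fact m \<le> real n ^ m"
    using binomial_fact_pow[of n m] by (metis of_nat_fact of_nat_le_iff of_nat_mult of_nat_power)
  have b: "real m ^ m / fact m \<le> exp (real m)" by (rule pow_over_fact_le_exp) simp
  have "exp (real m) = exp 1 ^ m" by (simp add: exp_of_nat_mult[symmetric])
  have "real (n choose m) = real (n choose m) * fact m / fact m" by simp
  also have "\<dots> \<le> real n ^ m / fact m" using a by (intro divide_right_mono) auto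
  also have "\<dots> = (real n / real m) ^ m * (real m ^ m / fact m)"
    using assms by (simp add: power_divide)
  also have "\<dots> \<le> (real n / real m) ^ m * exp 1 ^ m"
    using b \<open>exp (real m) = exp 1 ^ m\<close> by (intro mult_left_mono) auto
  also have "\<dots> = (exp 1 * real n / real m) ^ m" by (simp add: power_mult_distrib[symmetric] mult.commute)
  finally show ?thesis .
qed

lemma exp_quad:
  fixes x :: real assumes "\<bar>x\<bar> \<le> 1"
  shows "exp x \<le> 1 + x + x\<^sup>2"
proof (cases "x \<ge> 0")
  case True thus ?thesis using exp_bound[of x] assms by auto
next
  case False
  define h where "h = -x"
  have h: "0 \<le> h" "h \<le> 1" using False assms by (auto simp: h_def)
  have e: "1 + h + h\<^sup>2/2 \<le> exp h" using exp_lower_Taylor_quadratic h by auto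
  have pos: "0 < 1 + h + h\<^sup>2/2" using h by (simp add: add_pos_nonneg)
  have "(1 - h + h\<^sup>2) * (1 + h + h\<^sup>2/2) \<ge> 1"
  proof -
    have "(1 - h + h\<^sup>2) * (1 + h + h\<^sup>2/2) = 1 + h\<^sup>2/2 + h^3/2 + h^4/2"
      by (simp add: power2_eq_square power3_eq_cube power4_eq_xxxx field_simps)
    thus ?thesis using h by simp
  qed
  hence "(1 - h + h\<^sup>2) * exp h \<ge> 1"
    using e h by (smt (verit) mult_left_mono zero_le_power2)
  hence "exp (-h) \<le> 1 - h + h\<^sup>2"
    by (simp add: exp_minus field_simps)
  thus ?thesis by (simp add: h_def)
qed



lemma finite_lits[simp]: "finite (lits N)" by (simp add: lits_def)
lemma card_lits[simp]: "card (lits N) = 2 * N" by (simp add: lits_def card_cartesian_product)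

lemma finite_formulas[simp]: "finite (formulas k N M)"
  unfolding formulas_def by (intro finite_PiE) auto

lemma card_formulas: "card (formulas k N M) = (2 * N) ^ (k * M)"
  unfolding formulas_def by (simp add: card_PiE card_cartesian_product mult.commute)

lemma gf:
  fixes z :: real
  assumes L: "L \<subseteq> lits N"
  shows "(\<Sum>\<Phi>\<in>formulas k N M. z ^ card {p\<in>{0..<M}\<times>{0..<k}. \<Phi> p \<in> L})
         = (real (2*N) - real (card L) + real (card L) * z) ^ (k * M)"
proof -
  define I where "I = {0..<M}\<times>{0..<k}"
  have fI: "finite I" by (simp add: I_def)
  have cI: "card I = k * M" by (simp add: I_def card_cartesian_product)
  have fL: "finite L" by (rule finite_subset[OF L]) simp
  have 1: "z ^ card {p\<in>I. \<Phi> p \<in> L} = (\<Prod>p\<in>I. (\<lambda>l. if l \<in> L then z else 1) (\<Phi> p))" for \<Phi>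
  proof -
    have "(\<Prod>p\<in>I. (\<lambda>l. if l \<in> L then z else 1) (\<Phi> p)) = (\<Prod>p\<in>I \<inter> {p. \<Phi> p \<in> L}. z)"
      using fI by (simp add: prod.If_cases)
    also have "\<dots> = z ^ card {p\<in>I. \<Phi> p \<in> L}" by (simp add: Collect_conj_eq Int_commute)
    finally show ?thesis by simp
  qed
  have 2: "(\<Sum>l\<in>lits N. if l \<in> L then z else 1) = real (2*N) - real (card L) + real (card L) * z"
  proof -
    have i1: "lits N \<inter> {l. l\<in>L} = L" using L by auto
    have i2: "lits N \<inter> - {l. l\<in>L} = lits N - L" by auto
    have cl: "card L \<le> 2 * N" using card_mono[OF _ L] by simp
    have c: "real (card (lits N - L)) = real (2*N) - real (card L)"
      using L fL cl by (simp add: card_Diff_subset of_nat_diff)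
    have "(\<Sum>l\<in>lits N. if l \<in> L then z else 1) = (\<Sum>l\<in>lits N \<inter> {l. l\<in>L}. z) + (\<Sum>l\<in>lits N \<inter> - {l. l\<in>L}. 1)"
      by (simp only: sum.If_cases finite_lits)
    also have "\<dots> = real (card L) * z + real (card (lits N - L))" unfolding i1 i2 by simp
    finally show ?thesis using c by simp
  qed
  have "(\<Sum>\<Phi>\<in>formulas k N M. z ^ card {p\<in>I. \<Phi> p \<in> L})
       = (\<Sum>\<Phi>\<in>PiE I (\<lambda>_. lits N). \<Prod>p\<in>I. (\<lambda>l. if l \<in> L then z else 1) (\<Phi> p))"
    unfolding formulas_def I_def[symmetric] by (intro sum.cong refl 1)
  also have "\<dots> = (\<Prod>p\<in>I. \<Sum>l\<in>lits N. if l \<in> L then z else 1)"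
    by (rule prod_sum_PiE[symmetric]) (use fI in auto)
  also have "\<dots> = (real (2*N) - real (card L) + real (card L) * z) ^ (k * M)"
    using 2 cI by simp
  finally show ?thesis by (simp add: I_def)
qed

lemma chernoff:
  assumes N: "N > 0" and L: "L \<subseteq> lits N" and E: "E \<subseteq> formulas k N M"
    and h: "\<And>\<Phi>. \<Phi> \<in> E \<Longrightarrow> \<eta> * a \<le> \<eta> * real (card {p\<in>{0..<M}\<times>{0..<k}. \<Phi> p \<in> L})"
  shows "real (card E) \<le> real (card (formulas k N M)) *
           exp (real (k*M) * (real (card L) / real (2*N)) * (exp \<eta> - 1) - \<eta> * a)"
proof -
  define X where "X \<Phi> = card {p\<in>{0..<M}\<times>{0..<k}. \<Phi> p \<in> L}" for \<Phi>
  define p where "p = real (card L) / real (2*N)"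
  have fL: "finite L" by (rule finite_subset[OF L]) simp
  have p01: "0 \<le> p" "p \<le> 1" using card_mono[OF _ L] N by (auto simp: p_def)
  have fE: "finite E" by (rule finite_subset[OF E]) simp
  have "real (card E) * exp (\<eta> * a) = (\<Sum>\<Phi>\<in>E. exp (\<eta> * a))" by simp
  also have "\<dots> \<le> (\<Sum>\<Phi>\<in>E. exp \<eta> ^ X \<Phi>)"
    by (intro sum_mono) (use h in \<open>auto simp: X_def exp_of_nat_mult[symmetric] mult.commute\<close>)
  also have "\<dots> \<le> (\<Sum>\<Phi>\<in>formulas k N M. exp \<eta> ^ X \<Phi>)"
    by (intro sum_mono2) (use E in auto)
  also have "\<dots> = (real (2*N) - real (card L) + real (card L) * exp \<eta>) ^ (k * M)"
    unfolding X_def by (rule gf[OF L])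
  also have "real (2*N) - real (card L) + real (card L) * exp \<eta> = real (2*N) * (1 + p * (exp \<eta> - 1))"
    using N by (simp add: p_def field_simps)
  also have "(real (2*N) * (1 + p * (exp \<eta> - 1))) ^ (k*M) = real (2*N) ^ (k*M) * (1 + p * (exp \<eta> - 1)) ^ (k*M)"
    by (simp add: power_mult_distrib)
  also have "\<dots> \<le> real (2*N) ^ (k*M) * exp (p * (exp \<eta> - 1)) ^ (k*M)"
  proof -
    have "0 \<le> 1 + p * (exp \<eta> - 1)"
    proof -
      have "p * (exp \<eta> - 1) \<ge> p * (-1)" using p01 by (intro mult_left_mono) auto
      thus ?thesis using p01 by simp
    qed
    hence "(1 + p * (exp \<eta> - 1)) ^ (k*M) \<le> exp (p * (exp \<eta> - 1)) ^ (k*M)"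
      by (intro power_mono) (simp add: add.commute exp_ge_add_one_self)
    thus ?thesis by (intro mult_left_mono) auto
  qed
  also have "\<dots> = real (card (formulas k N M)) * exp (real (k*M) * p * (exp \<eta> - 1))"
    by (simp add: card_formulas exp_of_nat_mult[symmetric] mult.assoc)
  finally have "real (card E) * exp (\<eta> * a) \<le> real (card (formulas k N M)) * exp (real (k*M) * p * (exp \<eta> - 1))" .
  hence "real (card E) \<le> real (card (formulas k N M)) * exp (real (k*M) * p * (exp \<eta> - 1)) / exp (\<eta> * a)"
    by (simp add: field_simps)
  thus ?thesis by (simp add: p_def exp_diff)
qed

lemma count_fix:
  assumes N: "N > 0" and P: "P \<subseteq> {0..<M}\<times>{0..<k}" and S: "S \<subseteq> {0..<N}"
  shows "real (card {\<Phi>\<in>formulas k N M. \<forall>p\<in>P. fst (\<Phi> p) \<in> S})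
         = real (card (formulas k N M)) * (real (card S) / real N) ^ card P"
proof -
  define I where "I = {0..<M}\<times>{0..<k}"
  have fI: "finite I" by (simp add: I_def)
  have fP: "finite P" by (rule finite_subset[OF P]) simp
  have cPI: "card P \<le> card I" unfolding I_def using card_mono[OF _ P] by simp
  have eq: "{\<Phi>\<in>formulas k N M. \<forall>p\<in>P. fst (\<Phi> p) \<in> S} = PiE I (\<lambda>p. if p \<in> P then S \<times> UNIV else lits N)"
  proof (intro set_eqI iffI)
    fix \<Phi> assume "\<Phi> \<in> {\<Phi>\<in>formulas k N M. \<forall>p\<in>P. fst (\<Phi> p) \<in> S}"
    hence h: "\<Phi> \<in> extensional I" "\<forall>p\<in>I. \<Phi> p \<in> lits N" "\<forall>p\<in>P. fst (\<Phi> p) \<in> S"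
      by (auto simp: formulas_def I_def PiE_iff)
    show "\<Phi> \<in> PiE I (\<lambda>p. if p \<in> P then S \<times> UNIV else lits N)"
      unfolding PiE_iff using h by (auto simp: mem_Times_iff)
  next
    fix \<Phi> assume "\<Phi> \<in> PiE I (\<lambda>p. if p \<in> P then S \<times> UNIV else lits N)"
    hence h: "\<Phi> \<in> extensional I" "\<forall>p\<in>I. \<Phi> p \<in> (if p \<in> P then S \<times> UNIV else lits N)"
      by (auto simp: PiE_iff)
    have "\<forall>p\<in>I. \<Phi> p \<in> lits N"
    proof
      fix p assume "p \<in> I"
      show "\<Phi> p \<in> lits N"
    proof (cases "p \<in> P")
      case True
      hence "fst (\<Phi> p) \<in> S" using h(2) \<open>p \<in> I\<close> by (auto simp: mem_Times_iff)
      thus ?thesis using S by (auto simp: lits_def mem_Times_iff)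
    next
      case False thus ?thesis using h(2) \<open>p \<in> I\<close> by auto
    qed
    qed
    moreover have "\<forall>p\<in>P. fst (\<Phi> p) \<in> S"
    proof
      fix p assume "p \<in> P"
      hence "p \<in> I" using P by (auto simp: I_def)
      hence "\<Phi> p \<in> S \<times> UNIV" using h(2) \<open>p \<in> P\<close> by force
      thus "fst (\<Phi> p) \<in> S" by (auto simp: mem_Times_iff)
    qed
    ultimately show "\<Phi> \<in> {\<Phi>\<in>formulas k N M. \<forall>p\<in>P. fst (\<Phi> p) \<in> S}"
      using h(1) by (auto simp: formulas_def I_def PiE_iff)
  qed
  have "card (PiE I (\<lambda>p. if p \<in> P then S \<times> UNIV else lits N))
      = (\<Prod>p\<in>I. if p \<in> P then 2 * card S else 2 * N)"
  proof -
    have "card (S \<times> (UNIV::bool set)) = 2 * card S" by (simp add: card_cartesian_product)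
    hence "\<And>p. card (if p \<in> P then S \<times> UNIV else lits N) = (if p \<in> P then 2 * card S else 2 * N)"
      by simp
    thus ?thesis using fI by (simp add: card_PiE)
  qed
  also have "\<dots> = (\<Prod>p\<in>I \<inter> {p. p\<in>P}. 2 * card S) * (\<Prod>p\<in>I \<inter> - {p. p\<in>P}. 2 * N)"
    using fI by (simp add: prod.If_cases)
  also have "I \<inter> {p. p\<in>P} = P" using P by (auto simp: I_def)
  also have "I \<inter> - {p. p\<in>P} = I - P" by auto
  finally have c: "card {\<Phi>\<in>formulas k N M. \<forall>p\<in>P. fst (\<Phi> p) \<in> S} = (2 * card S) ^ card P * (2*N) ^ (card I - card P)"
    using eq fP P by (simp add: card_Diff_subset I_def)
  have cF0: "card (formulas k N M) = (2*N) ^ card I"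
    by (simp add: card_formulas I_def card_cartesian_product mult.commute)
  have "card I = card P + (card I - card P)" using cPI by simp
  hence "(2*N) ^ card I = (2*N) ^ card P * (2*N) ^ (card I - card P)" by (metis power_add)
  hence cF: "card (formulas k N M) = (2*N) ^ card P * (2*N) ^ (card I - card P)"
    using cF0 by simp
  show ?thesis
    using N unfolding c cF by (simp add: power_divide field_simps power_mult_distrib)
qed



definition st :: "nat \<Rightarrow> real \<Rightarrow> nat \<Rightarrow> nat \<Rightarrow> cnf \<Rightarrow> nat \<Rightarrow> nat set \<times> nat set" where
  "st k r N M \<Phi> t = (pr_step k r N \<Phi> ^^ t) (bad_vars k r N \<Phi> {0..<M}, {0..<M})"

context
  fixes k :: nat and r :: real and N M :: nat and \<Phi> :: cnf
begin

abbreviation "UU t \<equiv> fst (st k r N M \<Phi> t)"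
abbreviation "CC t \<equiv> snd (st k r N M \<Phi> t)"

lemma st_0: "st k r N M \<Phi> 0 = (bad_vars k r N \<Phi> {0..<M}, {0..<M})"
  by (simp add: st_def)

lemma st_Suc: "st k r N M \<Phi> (Suc t) = pr_step k r N \<Phi> (st k r N M \<Phi> t)"
  by (simp add: st_def)

lemma removed_eq: "removed_vars k r N M \<Phi> = (\<Union>t. UU t)"
  by (simp add: removed_vars_def st_def)

lemma UU_Suc: "UU t \<subseteq> UU (Suc t)"
  by (auto simp: st_Suc pr_step_def Let_def)

lemma CC_Suc: "CC (Suc t) \<subseteq> CC t"
  by (auto simp: st_Suc pr_step_def Let_def)

lemma UU_mono: "t \<le> t' \<Longrightarrow> UU t \<subseteq> UU t'"
  by (rule lift_Suc_mono_le[of UU]) (use UU_Suc in auto)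

lemma CC_anti: "t \<le> t' \<Longrightarrow> CC t' \<subseteq> CC t"
  by (rule lift_Suc_antimono_le[of CC]) (use CC_Suc in auto)

lemma CC_sub: "CC t \<subseteq> {0..<M}"
  using CC_anti[of 0 t] by (simp add: st_0)

lemma UU_sub: "UU t \<subseteq> {0..<N}"
proof (induction t)
  case 0 thus ?case by (auto simp: st_0 bad_vars_def)
next
  case (Suc t) thus ?case by (auto simp: st_Suc pr_step_def Let_def bad_vars_def)
qed

lemma UU_bad: "x \<in> UU t \<Longrightarrow> \<exists>t'\<le>t. x \<in> bad_vars k r N \<Phi> (CC t')"
proof (induction t)
  case 0 thus ?case by (auto simp: st_0)
next
  case (Suc t)
  show ?case
  proof (cases "x \<in> UU t")
    case True thus ?thesis using Suc.IH le_SucI by blast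
  next
    case False
    hence "x \<in> bad_vars k r N \<Phi> (CC (Suc t))"
      using Suc.prems by (auto simp: st_Suc pr_step_def Let_def split: if_splits)
    thus ?thesis by blast
  qed
qed

lemma card_pos_mono: "A \<subseteq> B \<Longrightarrow> card {j. j < k \<and> fst (\<Phi> (i, j)) \<in> A} \<le> card {j. j < k \<and> fst (\<Phi> (i, j)) \<in> B}"
  by (intro card_mono) auto

lemma CC_heavy: "i \<in> {0..<M} \<Longrightarrow> i \<notin> CC (Suc t) \<Longrightarrow> 3 \<le> card {j. j < k \<and> fst (\<Phi> (i, j)) \<in> UU t}"
proof (induction t)
  case 0
  thus ?case by (auto simp: st_Suc st_0 pr_step_def Let_def heavy_def split: if_splits)
next
  case (Suc t)
  show ?case
  proof (cases "i \<in> CC (Suc t)")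
    case True
    thus ?thesis using Suc.prems
      by (auto simp: st_Suc[of "Suc t"] pr_step_def Let_def heavy_def split: if_splits)
  next
    case False
    hence "3 \<le> card {j. j < k \<and> fst (\<Phi> (i, j)) \<in> UU t}" using Suc.IH Suc.prems by blast
    also have "\<dots> \<le> card {j. j < k \<and> fst (\<Phi> (i, j)) \<in> UU (Suc t)}"
      by (rule card_pos_mono[OF UU_Suc])
    finally show ?thesis .
  qed
qed

lemma finite_in_some_UU:
  assumes "finite A" "A \<subseteq> (\<Union>t. UU t)"
  shows "\<exists>n. A \<subseteq> UU n"
  using assms
proof (induction A rule: finite_induct)
  case empty thus ?case by auto
next
  case (insert x A)
  then obtain n where n: "A \<subseteq> UU n" by auto
  obtain t where t: "x \<in> UU t" using insert.prems by auto
  have "insert x A \<subseteq> UU (max n t)"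
    using n t UU_mono[of n "max n t"] UU_mono[of t "max n t"] by auto
  thus ?case by blast
qed

end



definition badset :: "nat \<Rightarrow> real \<Rightarrow> nat \<Rightarrow> nat \<Rightarrow> cnf \<Rightarrow> real \<Rightarrow> nat set" where
  "badset k r N M \<Phi> T = {x\<in>{0..<N}. \<exists>b. \<bar>real (deg k \<Phi> {0..<M} (x,b)) - real k * r / 2\<bar> > T / 2}"

lemma occ_big:
  fixes T :: real
  assumes T: "T = real k ^ 3 * 2 powr (real k / 2)"
    and C': "C' \<subseteq> {0..<M}" and C: "C \<subseteq> C'"
    and dev: "deviates k r \<Phi> C' x"
    and good: "\<And>b. \<bar>real (deg k \<Phi> {0..<M} (x,b)) - real k * r / 2\<bar> \<le> T / 2"
  shows "T / 2 < real (card {(i,j). i \<in> {0..<M} - C \<and> j < k \<and> fst (\<Phi> (i,j)) = x})"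
proof -
  define m where "m = real k * r / 2"
  obtain b where b: "\<bar>real (deg k \<Phi> C' (x,b)) - m\<bar> > T"
    using dev unfolding deviates_def T m_def less_max_iff_disj by blast
  define A where "A = {(i,j). i \<in> {0..<M} \<and> j < k \<and> \<Phi> (i,j) = (x,b)}"
  define A1 where "A1 = {(i,j). i \<in> C' \<and> j < k \<and> \<Phi> (i,j) = (x,b)}"
  define A2 where "A2 = {(i,j). i \<in> {0..<M} - C' \<and> j < k \<and> \<Phi> (i,j) = (x,b)}"
  define Oc where "Oc = {(i,j). i \<in> {0..<M} - C \<and> j < k \<and> fst (\<Phi> (i,j)) = x}"
  have fin: "finite X" if "X \<subseteq> {0..<M} \<times> {0..<k}" for X
    by (rule finite_subset[OF that]) simp
  have fA: "finite A" "finite A1" "finite A2" "finite Oc"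
    using C' by (auto simp: A_def A1_def A2_def Oc_def intro!: fin)
  have "A \<subseteq> A1 \<union> A2" by (auto simp: A_def A1_def A2_def)
  hence "card A \<le> card A1 + card A2"
    using fA by (meson card_Un_le card_mono finite_UnI le_trans)
  moreover have "card A1 \<le> card A" using C' fA by (intro card_mono) (auto simp: A_def A1_def)
  moreover have "card A2 \<le> card Oc" using C fA by (intro card_mono) (auto simp: A2_def Oc_def)
  moreover have "deg k \<Phi> C' (x,b) = card A1" "deg k \<Phi> {0..<M} (x,b) = card A"
    by (simp_all add: deg_def A_def A1_def)
  moreover have "\<bar>real (card A) - m\<bar> \<le> T / 2" using good[of b] by (simp add: m_def \<open>deg k \<Phi> {0..<M} (x,b) = card A\<close>)
  ultimately show ?thesis using b unfolding Oc_def[symmetric] by (auto simp: abs_if split: if_splits)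
qed

lemma sum_occ:
  fixes k :: nat and \<Phi> :: cnf
  assumes "finite R" "finite S"
  shows "(\<Sum>x\<in>S. card {(i,j). i \<in> R \<and> j < k \<and> fst (\<Phi> (i,j)) = x})
        = card {(i,j). i \<in> R \<and> j < k \<and> fst (\<Phi> (i,j)) \<in> S}"
proof -
  have fin: "finite {(i,j). i \<in> R \<and> j < k \<and> fst (\<Phi> (i,j)) = x}" for x
    by (rule finite_subset[of _ "R \<times> {0..<k}"]) (use assms in auto)
  have "{(i,j). i \<in> R \<and> j < k \<and> fst (\<Phi> (i,j)) \<in> S}
      = (\<Union>x\<in>S. {(i,j). i \<in> R \<and> j < k \<and> fst (\<Phi> (i,j)) = x})" by auto
  also have "card \<dots> = (\<Sum>x\<in>S. card {(i,j). i \<in> R \<and> j < k \<and> fst (\<Phi> (i,j)) = x})"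
    by (rule card_UN_disjoint) (use assms fin in auto)
  finally show ?thesis by simp
qed



lemma det:
  fixes T :: real and k :: nat and \<Phi> :: cnf
  assumes T: "T = real k ^ 3 * 2 powr (real k / 2)"
    and s: "1 \<le> s"
    and big: "s + card (badset k r N M \<Phi> T) < card (removed_vars k r N M \<Phi>)"
  shows "\<exists>S' R. S' \<subseteq> {0..<N} \<and> card S' \<le> s + card (badset k r N M \<Phi> T) \<and> R \<subseteq> {0..<M}
          \<and> real s * T / 2 < real k * real (card R)
          \<and> (\<forall>i\<in>R. 2 \<le> card {j. j < k \<and> fst (\<Phi> (i,j)) \<in> S'})"
proof -
  define Bad where "Bad = badset k r N M \<Phi> T"
  define G where "G = {0..<N} - Bad"
  let ?U = "UU k r N M \<Phi>" and ?C = "CC k r N M \<Phi>"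
  have Tnn: "T \<ge> 0" using T by simp
  have remsub: "removed_vars k r N M \<Phi> \<subseteq> {0..<N}"
    unfolding removed_eq using UU_sub[of k r N M \<Phi>] by (simp add: UN_subset_iff)
  have finrem: "finite (removed_vars k r N M \<Phi>)" by (rule finite_subset[OF remsub]) simp
  have "removed_vars k r N M \<Phi> \<subseteq> (\<Union>t. ?U t)" by (simp add: removed_eq)
  from finite_in_some_UU[OF finrem this]
  obtain n where n: "removed_vars k r N M \<Phi> \<subseteq> ?U n" by blast
  have finU: "\<And>t. finite (?U t)" by (rule finite_subset[OF UU_sub]) simp
  have fBad: "finite Bad" by (rule finite_subset[of _ "{0..<N}"]) (auto simp: Bad_def badset_def)
  have "card (?U n) \<le> card (?U n \<inter> G) + card Bad"
  proof -
    have "?U n \<subseteq> (?U n \<inter> G) \<union> Bad" using UU_sub[of k r N M \<Phi> n] by (auto simp: G_def)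
    hence "card (?U n) \<le> card ((?U n \<inter> G) \<union> Bad)"
      by (intro card_mono) (use fBad finU in auto)
    also have "\<dots> \<le> card (?U n \<inter> G) + card Bad" by (rule card_Un_le)
    finally show ?thesis .
  qed
  moreover have "card (removed_vars k r N M \<Phi>) \<le> card (?U n)"
    by (intro card_mono n) (rule finite_subset[OF UU_sub], simp)
  ultimately have ex: "s \<le> card (?U n \<inter> G)" using big unfolding Bad_def by linarith
  define t where "t = (LEAST t. s \<le> card (?U t \<inter> G))"
  have t: "s \<le> card (?U t \<inter> G)" unfolding t_def by (rule LeastI[of _ n]) (rule ex)
  have U0G: "?U 0 \<inter> G = {}"
  proof (rule ccontr)
    assume "?U 0 \<inter> G \<noteq> {}"
    then obtain x where x: "x \<in> ?U 0" "x \<in> G" by blast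
    hence dev: "deviates k r \<Phi> {0..<M} x" by (auto simp: st_0 bad_vars_def)
    have gd: "\<And>b. \<bar>real (deg k \<Phi> {0..<M} (x,b)) - real k * r / 2\<bar> \<le> T / 2"
      using x(2) by (auto simp: G_def Bad_def badset_def not_less)
    have "\<bar>real (deg k \<Phi> {0..<M} (x,b)) - real k * r / 2\<bar> \<le> T" for b
      using gd[of b] Tnn by linarith
    hence "\<bar>real (deg k \<Phi> {0..<M} (x,True)) - real k * r / 2\<bar> \<le> T"
      "\<bar>real (deg k \<Phi> {0..<M} (x,False)) - real k * r / 2\<bar> \<le> T" by auto
    thus False using dev unfolding deviates_def T[symmetric] by linarith
  qed
  have "t \<noteq> 0"
  proof
    assume "t = 0"
    hence "card (?U t \<inter> G) = 0" using U0G by simp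
    thus False using t s by linarith
  qed
  then obtain t0 where t0: "t = Suc t0" using not0_implies_Suc by blast
  have lt: "card (?U t0 \<inter> G) < s"
    using not_less_Least[of t0 "\<lambda>t. s \<le> card (?U t \<inter> G)"] t0 unfolding t_def by auto
  have finUG: "finite (?U t \<inter> G)" using finU[of t] by simp
  have sub0: "?U t0 \<inter> G \<subseteq> ?U t \<inter> G" using UU_mono[of t0 t k r N M \<Phi>] t0 by auto
  obtain X where X: "X \<subseteq> (?U t \<inter> G) - (?U t0 \<inter> G)" "card X = s - card (?U t0 \<inter> G)"
  proof -
    have "card ((?U t \<inter> G) - (?U t0 \<inter> G)) = card (?U t \<inter> G) - card (?U t0 \<inter> G)"
      using sub0 finUG finite_subset[OF sub0 finUG] by (simp add: card_Diff_subset)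
    hence "s - card (?U t0 \<inter> G) \<le> card ((?U t \<inter> G) - (?U t0 \<inter> G))" using t by linarith
    thus ?thesis using that obtain_subset_with_card_n by metis
  qed
  define S where "S = (?U t0 \<inter> G) \<union> X"
  have finX: "finite X" by (rule finite_subset[OF X(1)]) (use finUG in simp)
  have finS: "finite S" unfolding S_def using finX finite_subset[OF sub0 finUG] by simp
  have cS: "card S = s"
  proof -
    have "card S = card (?U t0 \<inter> G) + card X"
      unfolding S_def using X finS by (intro card_Un_disjoint) (auto simp: S_def)
    thus ?thesis using X lt by simp
  qed
  have SUG: "S \<subseteq> ?U t \<inter> G" unfolding S_def using X sub0 by auto
  define S' where "S' = S \<union> Bad"
  define R where "R = {0..<M} - ?C t"
  have S'N: "S' \<subseteq> {0..<N}" using SUG UU_sub[of k r N M \<Phi> t] by (auto simp: S'_def Bad_def badset_def)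
  have cS': "card S' \<le> s + card Bad" unfolding S'_def using card_Un_le[of S Bad] cS by simp
  have RM: "R \<subseteq> {0..<M}" by (auto simp: R_def)
  have finR: "finite R" by (rule finite_subset[OF RM]) simp
  have heavyR: "\<forall>i\<in>R. 2 \<le> card {j. j < k \<and> fst (\<Phi> (i,j)) \<in> S'}"
  proof
    fix i assume i: "i \<in> R"
    have "3 \<le> card {j. j < k \<and> fst (\<Phi> (i, j)) \<in> ?U t0}"
      using CC_heavy[where i=i and t=t0 and k=k and r=r and N=N and M=M and \<Phi>=\<Phi>] i t0 by (auto simp: R_def)
    also have "\<dots> \<le> card {j. j < k \<and> fst (\<Phi> (i,j)) \<in> S'}"
    proof (rule card_pos_mono)
      show "?U t0 \<subseteq> S'" using UU_sub[of k r N M \<Phi> t0] by (auto simp: S'_def S_def G_def)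
    qed
    finally show "2 \<le> card {j. j < k \<and> fst (\<Phi> (i,j)) \<in> S'}" by simp
  qed
  have occ: "T / 2 < real (card {(i,j). i \<in> R \<and> j < k \<and> fst (\<Phi> (i,j)) = x})" if x: "x \<in> S" for x
  proof -
    have xU: "x \<in> ?U t" and xG: "x \<in> G" using SUG x by auto
    obtain t' where t': "t' \<le> t" "x \<in> bad_vars k r N \<Phi> (?C t')" using UU_bad[OF xU] by blast
    show ?thesis unfolding R_def
    proof (rule occ_big[OF T])
      show "?C t' \<subseteq> {0..<M}" by (rule CC_sub)
      show "?C t \<subseteq> ?C t'" by (rule CC_anti[OF t'(1)])
      show "deviates k r \<Phi> (?C t') x" using t'(2) by (simp add: bad_vars_def)
      show "\<And>b. \<bar>real (deg k \<Phi> {0..<M} (x,b)) - real k * r / 2\<bar> \<le> T / 2"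
        using xG by (auto simp: G_def Bad_def badset_def not_less)
    qed
  qed
  have "real s * (T / 2) < (\<Sum>x\<in>S. real (card {(i,j). i \<in> R \<and> j < k \<and> fst (\<Phi> (i,j)) = x}))"
  proof -
    have "S \<noteq> {}" using cS s by auto
    hence "(\<Sum>x\<in>S. T / 2) < (\<Sum>x\<in>S. real (card {(i,j). i \<in> R \<and> j < k \<and> fst (\<Phi> (i,j)) = x}))"
      using finS occ by (intro sum_strict_mono) auto
    thus ?thesis using cS by simp
  qed
  also have "\<dots> = real (card {(i,j). i \<in> R \<and> j < k \<and> fst (\<Phi> (i,j)) \<in> S})"
    unfolding of_nat_sum[symmetric] sum_occ[OF finR finS] ..
  also have "\<dots> \<le> real (card (R \<times> {0..<k}))"
    using finR by (intro of_nat_mono card_mono) auto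
  also have "\<dots> = real k * real (card R)" by (simp add: card_cartesian_product)
  finally have "real s * T / 2 < real k * real (card R)" by simp
  hence "S' \<subseteq> {0..<N} \<and> card S' \<le> s + card Bad \<and> R \<subseteq> {0..<M}
          \<and> real s * T / 2 < real k * real (card R)
          \<and> (\<forall>i\<in>R. 2 \<le> card {j. j < k \<and> fst (\<Phi> (i,j)) \<in> S'})"
    using S'N cS' RM heavyR by simp
  thus ?thesis unfolding Bad_def by blast
qed



lemma union_chernoff:
  assumes N: "N > 0" and E: "E \<subseteq> formulas k N M"
    and hyp: "\<And>\<Phi>. \<Phi> \<in> E \<Longrightarrow> \<exists>L. L \<subseteq> lits N \<and> card L = lam \<and>
                 \<eta> * a \<le> \<eta> * real (card {p\<in>{0..<M}\<times>{0..<k}. \<Phi> p \<in> L})"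
  shows "real (card E) \<le> real ((2*N) choose lam) * (real (card (formulas k N M)) *
           exp (real (k*M) * (real lam / real (2*N)) * (exp \<eta> - 1) - \<eta> * a))"
proof -
  define Ls where "Ls = {L. L \<subseteq> lits N \<and> card L = lam}"
  define EL where "EL L = {\<Phi>\<in>formulas k N M. \<eta> * a \<le> \<eta> * real (card {p\<in>{0..<M}\<times>{0..<k}. \<Phi> p \<in> L})}" for L
  define B where "B = real (card (formulas k N M)) *
           exp (real (k*M) * (real lam / real (2*N)) * (exp \<eta> - 1) - \<eta> * a)"
  have finLs: "finite Ls" unfolding Ls_def by (rule finite_subset[of _ "Pow (lits N)"]) auto
  have cLs: "card Ls = (2*N) choose lam" unfolding Ls_def using n_subsets[of "lits N" lam] by simp
  have "E \<subseteq> (\<Union>L\<in>Ls. EL L)"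
  proof
    fix \<Phi> assume "\<Phi> \<in> E"
    then obtain L where "L \<subseteq> lits N" "card L = lam"
      "\<eta> * a \<le> \<eta> * real (card {p\<in>{0..<M}\<times>{0..<k}. \<Phi> p \<in> L})" using hyp by blast
    thus "\<Phi> \<in> (\<Union>L\<in>Ls. EL L)" using E \<open>\<Phi> \<in> E\<close> by (auto simp: Ls_def EL_def)
  qed
  hence "card E \<le> card (\<Union>L\<in>Ls. EL L)"
    by (intro card_mono) (rule finite_subset[of _ "formulas k N M"], auto simp: EL_def)
  also have "\<dots> \<le> (\<Sum>L\<in>Ls. card (EL L))" by (rule card_UN_le[OF finLs])
  finally have "real (card E) \<le> real (\<Sum>L\<in>Ls. card (EL L))" by (simp only: of_nat_le_iff)
  also have "\<dots> = (\<Sum>L\<in>Ls. real (card (EL L)))" by (rule of_nat_sum)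
  also have "\<dots> \<le> (\<Sum>L\<in>Ls. B)"
  proof (rule sum_mono)
    fix L assume "L \<in> Ls"
    hence L: "L \<subseteq> lits N" "card L = lam" by (auto simp: Ls_def)
    show "real (card (EL L)) \<le> B" unfolding B_def L(2)[symmetric] EL_def
      by (rule chernoff[OF N L(1)]) auto
  qed
  also have "\<dots> = real ((2*N) choose lam) * B" using cLs by simp
  finally show ?thesis unfolding B_def .
qed

lemma sumdeg:
  assumes "finite L"
  shows "card {p\<in>{0..<M}\<times>{0..<k}. \<Phi> p \<in> L} = (\<Sum>l\<in>L. deg k \<Phi> {0..<M} l)"
proof -
  have fin: "finite {(i, j). i \<in> {0..<M} \<and> j < k \<and> \<Phi> (i, j) = l}" for l
    by (rule finite_subset[of _ "{0..<M}\<times>{0..<k}"]) auto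
  have "{p\<in>{0..<M}\<times>{0..<k}. \<Phi> p \<in> L} = (\<Union>l\<in>L. {(i, j). i \<in> {0..<M} \<and> j < k \<and> \<Phi> (i, j) = l})"
    by auto
  also have "card \<dots> = (\<Sum>l\<in>L. card {(i, j). i \<in> {0..<M} \<and> j < k \<and> \<Phi> (i, j) = l})"
    by (rule card_UN_disjoint) (use assms fin in auto)
  finally show ?thesis by (simp add: deg_def)
qed

lemma ev_up:
  fixes c :: real
  assumes N: "N > 0" and eta: "\<eta> \<ge> 0"
  shows "real (card {\<Phi>\<in>formulas k N M. lam \<le> card {l\<in>lits N. real (deg k \<Phi> {0..<M} l) > c}})
    \<le> real ((2*N) choose lam) * (real (card (formulas k N M)) *
           exp (real (k*M) * (real lam / real (2*N)) * (exp \<eta> - 1) - \<eta> * (real lam * c)))"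
proof (rule union_chernoff[OF N])
  fix \<Phi> assume "\<Phi> \<in> {\<Phi>\<in>formulas k N M. lam \<le> card {l\<in>lits N. real (deg k \<Phi> {0..<M} l) > c}}"
  hence "lam \<le> card {l\<in>lits N. real (deg k \<Phi> {0..<M} l) > c}" by simp
  then obtain L where L: "L \<subseteq> {l\<in>lits N. real (deg k \<Phi> {0..<M} l) > c}" "card L = lam"
    and fL: "finite L" by (rule obtain_subset_with_card_n)
  have "real lam * c = (\<Sum>l\<in>L. c)" using L(2) by simp
  also have "\<dots> \<le> (\<Sum>l\<in>L. real (deg k \<Phi> {0..<M} l))"
    by (intro sum_mono) (use L(1) in auto)
  also have "\<dots> = real (card {p\<in>{0..<M}\<times>{0..<k}. \<Phi> p \<in> L})"
    by (simp add: sumdeg[OF fL])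
  finally have "\<eta> * (real lam * c) \<le> \<eta> * real (card {p\<in>{0..<M}\<times>{0..<k}. \<Phi> p \<in> L})"
    using eta by (intro mult_left_mono) auto
  thus "\<exists>L. L \<subseteq> lits N \<and> card L = lam \<and>
          \<eta> * (real lam * c) \<le> \<eta> * real (card {p\<in>{0..<M}\<times>{0..<k}. \<Phi> p \<in> L})"
    using L by blast
qed auto

lemma ev_dn:
  fixes c :: real
  assumes N: "N > 0" and eta: "\<eta> \<le> 0"
  shows "real (card {\<Phi>\<in>formulas k N M. lam \<le> card {l\<in>lits N. real (deg k \<Phi> {0..<M} l) < c}})
    \<le> real ((2*N) choose lam) * (real (card (formulas k N M)) *
           exp (real (k*M) * (real lam / real (2*N)) * (exp \<eta> - 1) - \<eta> * (real lam * c)))"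
proof (rule union_chernoff[OF N])
  fix \<Phi> assume "\<Phi> \<in> {\<Phi>\<in>formulas k N M. lam \<le> card {l\<in>lits N. real (deg k \<Phi> {0..<M} l) < c}}"
  hence "lam \<le> card {l\<in>lits N. real (deg k \<Phi> {0..<M} l) < c}" by simp
  then obtain L where L: "L \<subseteq> {l\<in>lits N. real (deg k \<Phi> {0..<M} l) < c}" "card L = lam"
    and fL: "finite L" by (rule obtain_subset_with_card_n)
  have "real (card {p\<in>{0..<M}\<times>{0..<k}. \<Phi> p \<in> L}) = (\<Sum>l\<in>L. real (deg k \<Phi> {0..<M} l))"
    by (simp add: sumdeg[OF fL])
  also have "\<dots> \<le> (\<Sum>l\<in>L. c)"
    by (intro sum_mono) (use L(1) in \<open>auto intro: less_imp_le\<close>)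
  also have "\<dots> = real lam * c" using L(2) by simp
  finally have "\<eta> * (real lam * c) \<le> \<eta> * real (card {p\<in>{0..<M}\<times>{0..<k}. \<Phi> p \<in> L})"
    using eta by (intro mult_left_mono_neg) auto
  thus "\<exists>L. L \<subseteq> lits N \<and> card L = lam \<and>
          \<eta> * (real lam * c) \<le> \<eta> * real (card {p\<in>{0..<M}\<times>{0..<k}. \<Phi> p \<in> L})"
    using L by blast
qed auto



lemma card_UN_bound:
  assumes "finite X" "\<And>x. x \<in> X \<Longrightarrow> real (card (A x)) \<le> b"
  shows "real (card (\<Union>x\<in>X. A x)) \<le> real (card X) * b"
proof -
  have "card (\<Union>x\<in>X. A x) \<le> (\<Sum>x\<in>X. card (A x))" by (rule card_UN_le[OF assms(1)])
  hence "real (card (\<Union>x\<in>X. A x)) \<le> real (\<Sum>x\<in>X. card (A x))" by (simp only: of_nat_le_iff)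
  also have "\<dots> = (\<Sum>x\<in>X. real (card (A x)))" by (rule of_nat_sum)
  also have "\<dots> \<le> (\<Sum>x\<in>X. b)" by (intro sum_mono assms(2))
  finally show ?thesis by simp
qed

lemma two_elems:
  assumes "2 \<le> card A"
  shows "\<exists>a b. a \<in> A \<and> b \<in> A \<and> a \<noteq> b"
proof -
  obtain T where T: "T \<subseteq> A" "card T = 2" by (rule obtain_subset_with_card_n[OF assms])
  then obtain x y where "T = {x,y}" "x \<noteq> y" by (auto simp: card_2_iff)
  thus ?thesis using T by blast
qed

definition EvB :: "nat \<Rightarrow> nat \<Rightarrow> nat \<Rightarrow> nat \<Rightarrow> nat \<Rightarrow> cnf set" where
  "EvB k N M \<sigma> \<rho> = {\<Phi>\<in>formulas k N M. \<exists>S'. S' \<subseteq> {0..<N} \<and> card S' = \<sigma> \<and>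
      (\<exists>R. R \<subseteq> {0..<M} \<and> card R = \<rho> \<and> (\<forall>i\<in>R. 2 \<le> card {j. j < k \<and> fst (\<Phi> (i,j)) \<in> S'}))}"

lemma evB_bound:
  assumes N: "N > 0"
  shows "real (card (EvB k N M \<sigma> \<rho>)) \<le> real (N choose \<sigma>) * (real (M choose \<rho>) *
     (real (k*k) ^ \<rho> * (real (card (formulas k N M)) * (real \<sigma> / real N) ^ (2*\<rho>))))"
proof -
  define Ss where "Ss = {S. S \<subseteq> {0..<N} \<and> card S = \<sigma>}"
  define Rs where "Rs = {R. R \<subseteq> {0..<M} \<and> card R = \<rho>}"
  define Pairs where "Pairs = {p::nat\<times>nat. fst p < k \<and> snd p < k \<and> fst p \<noteq> snd p}"
  define PJ where "PJ R J = (\<lambda>i. (i, fst (J i))) ` R \<union> (\<lambda>i. (i, snd (J i))) ` R" for R and J :: "nat \<Rightarrow> nat \<times> nat"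
  define EJ where "EJ S P = {\<Phi>\<in>formulas k N M. \<forall>p\<in>P. fst (\<Phi> p) \<in> S}" for S P
  define B where "B = real (card (formulas k N M)) * (real \<sigma> / real N) ^ (2*\<rho>)"
  have finSs: "finite Ss" unfolding Ss_def by (rule finite_subset[of _ "Pow {0..<N}"]) auto
  have cSs: "card Ss = N choose \<sigma>" unfolding Ss_def using n_subsets[of "{0..<N}" \<sigma>] by simp
  have finRs: "finite Rs" unfolding Rs_def by (rule finite_subset[of _ "Pow {0..<M}"]) auto
  have cRs: "card Rs = M choose \<rho>" unfolding Rs_def using n_subsets[of "{0..<M}" \<rho>] by simp
  have finP: "finite Pairs" unfolding Pairs_def by (rule finite_subset[of _ "{0..<k}\<times>{0..<k}"]) auto
  have cP: "card Pairs \<le> k * k"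
  proof -
    have "Pairs \<subseteq> {0..<k}\<times>{0..<k}" by (auto simp: Pairs_def mem_Times_iff)
    hence "card Pairs \<le> card ({0..<k}\<times>{0..<k})" by (intro card_mono) auto
    thus ?thesis by (simp add: card_cartesian_product)
  qed
  have sub: "EvB k N M \<sigma> \<rho> \<subseteq> (\<Union>S\<in>Ss. \<Union>R\<in>Rs. \<Union>J\<in>PiE R (\<lambda>_. Pairs). EJ S (PJ R J))"
  proof
    fix \<Phi> assume "\<Phi> \<in> EvB k N M \<sigma> \<rho>"
    then obtain S R where \<Phi>: "\<Phi> \<in> formulas k N M" and S: "S \<in> Ss" and R: "R \<in> Rs"
      and h: "\<forall>i\<in>R. 2 \<le> card {j. j < k \<and> fst (\<Phi> (i,j)) \<in> S}"
      unfolding EvB_def Ss_def Rs_def by blast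
    have "\<forall>i\<in>R. \<exists>p\<in>Pairs. fst (\<Phi> (i, fst p)) \<in> S \<and> fst (\<Phi> (i, snd p)) \<in> S"
    proof
      fix i assume "i \<in> R"
      then obtain a b where "a \<in> {j. j < k \<and> fst (\<Phi> (i,j)) \<in> S}" "b \<in> {j. j < k \<and> fst (\<Phi> (i,j)) \<in> S}" "a \<noteq> b"
        using two_elems h by blast
      thus "\<exists>p\<in>Pairs. fst (\<Phi> (i, fst p)) \<in> S \<and> fst (\<Phi> (i, snd p)) \<in> S"
        by (intro bexI[of _ "(a,b)"]) (auto simp: Pairs_def)
    qed
    then obtain J where J: "J \<in> PiE R (\<lambda>_. Pairs)"
      and hJ: "\<forall>i\<in>R. fst (\<Phi> (i, fst (J i))) \<in> S \<and> fst (\<Phi> (i, snd (J i))) \<in> S"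
      unfolding PiE_choice by blast
    have "\<Phi> \<in> EJ S (PJ R J)" using \<Phi> hJ by (auto simp: EJ_def PJ_def)
    thus "\<Phi> \<in> (\<Union>S\<in>Ss. \<Union>R\<in>Rs. \<Union>J\<in>PiE R (\<lambda>_. Pairs). EJ S (PJ R J))" using S R J by blast
  qed
  have finU: "finite (\<Union>S\<in>Ss. \<Union>R\<in>Rs. \<Union>J\<in>PiE R (\<lambda>_. Pairs). EJ S (PJ R J))"
    by (rule finite_subset[of _ "formulas k N M"]) (auto simp: EJ_def)
  have "real (card (EvB k N M \<sigma> \<rho>)) \<le> real (card (\<Union>S\<in>Ss. \<Union>R\<in>Rs. \<Union>J\<in>PiE R (\<lambda>_. Pairs). EJ S (PJ R J)))"
    using card_mono[OF finU sub] by simp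
  also have "\<dots> \<le> real (card Ss) * (real (card Rs) * (real (k*k) ^ \<rho> * B))"
  proof (rule card_UN_bound[OF finSs])
    fix S assume S: "S \<in> Ss"
    show "real (card (\<Union>R\<in>Rs. \<Union>J\<in>PiE R (\<lambda>_. Pairs). EJ S (PJ R J))) \<le> real (card Rs) * (real (k*k) ^ \<rho> * B)"
    proof (rule card_UN_bound[OF finRs])
      fix R assume R: "R \<in> Rs"
      have finR: "finite R" using R by (auto simp: Rs_def intro: finite_subset)
      have cPi: "card (PiE R (\<lambda>_. Pairs)) = card Pairs ^ \<rho>"
        using R finR by (simp add: card_PiE Rs_def)
      have "real (card (\<Union>J\<in>PiE R (\<lambda>_. Pairs). EJ S (PJ R J))) \<le> real (card (PiE R (\<lambda>_. Pairs))) * B"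
      proof (rule card_UN_bound)
        show "finite (PiE R (\<lambda>_. Pairs))" using finR finP by (intro finite_PiE) auto
        fix J assume J: "J \<in> PiE R (\<lambda>_. Pairs)"
        have inj1: "inj_on (\<lambda>i. (i, fst (J i))) R" by (auto simp: inj_on_def)
        have inj2: "inj_on (\<lambda>i. (i, snd (J i))) R" by (auto simp: inj_on_def)
        have disj: "(\<lambda>i. (i, fst (J i))) ` R \<inter> (\<lambda>i. (i, snd (J i))) ` R = {}"
          using J by (auto simp: Pairs_def PiE_iff)
        have cPJ: "card (PJ R J) = 2 * \<rho>"
          unfolding PJ_def using card_Un_disjoint[OF finite_imageI[OF finR] finite_imageI[OF finR] disj]
            card_image[OF inj1] card_image[OF inj2] R by (simp add: Rs_def)
        have PJsub: "PJ R J \<subseteq> {0..<M}\<times>{0..<k}"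
          using J R by (auto simp: PJ_def Pairs_def PiE_iff Rs_def)
        have Ssub: "S \<subseteq> {0..<N}" and cS: "card S = \<sigma>" using S by (auto simp: Ss_def)
        show "real (card (EJ S (PJ R J))) \<le> B"
          unfolding EJ_def B_def using count_fix[OF N PJsub Ssub] cPJ cS by simp
      qed
      also have "\<dots> \<le> real (k*k) ^ \<rho> * B"
      proof (intro mult_right_mono)
        show "real (card (PiE R (\<lambda>_. Pairs))) \<le> real (k*k) ^ \<rho>"
          unfolding cPi using cP by (metis of_nat_le_iff of_nat_power power_mono zero_le)
        show "0 \<le> B" by (simp add: B_def)
      qed
      finally show "real (card (\<Union>J\<in>PiE R (\<lambda>_. Pairs). EJ S (PJ R J))) \<le> real (k*k) ^ \<rho> * B" .
    qed
  qed
  finally show ?thesis unfolding cSs cRs B_def .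
qed



lemma tail_up:
  fixes \<mu> lam m k h T :: real
  assumes "0 \<le> lam" "0 \<le> h" "h \<le> 1" "lam*m \<le> \<mu>" "\<mu> \<le> lam*(m+k)" "(m+k)*h = T/4" "k \<le> T/8" "0 \<le> m"
  shows "\<mu>*(exp h - 1) - h*(lam*(m + T/2)) \<le> -(lam*h*T/8)"
proof -
  have e1: "exp h - 1 \<le> h + h\<^sup>2" using exp_bound[of h] assms by simp
  have e0: "0 \<le> exp h - 1" using assms by simp
  have mu0: "0 \<le> \<mu>" using assms(4) mult_nonneg_nonneg[OF assms(1) assms(8)] by linarith
  have "\<mu>*(exp h - 1) \<le> lam*(m+k)*(h + h\<^sup>2)"
    using mult_mono[OF assms(5) e1 _ e0] mu0 assms by simp
  moreover have "lam*(m+k)*(h + h\<^sup>2) - h*(lam*(m + T/2)) = lam*h*(k + (m+k)*h - T/2)"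
    by (simp add: algebra_simps power2_eq_square)
  moreover have "lam*h*(k + (m+k)*h - T/2) \<le> lam*h*(-T/8)"
    using assms by (intro mult_left_mono) auto
  ultimately show ?thesis by simp
qed

lemma tail_dn:
  fixes \<mu> lam m k h T :: real
  assumes "0 \<le> lam" "0 \<le> h" "h \<le> 1" "lam*m \<le> \<mu>" "(m+k)*h = T/4" "0 \<le> k" "0 \<le> m"
  shows "\<mu>*(exp (-h) - 1) - (-h)*(lam*(m - T/2)) \<le> -(lam*h*T/8)"
proof -
  have e1: "exp (-h) - 1 \<le> -h + h\<^sup>2" using exp_quad[of "-h"] assms by simp
  have "h * h \<le> h * 1" using assms by (intro mult_left_mono) auto
  hence q: "-h + h\<^sup>2 \<le> 0" by (simp add: power2_eq_square)
  have mu0: "0 \<le> \<mu>" using assms(4) mult_nonneg_nonneg[OF assms(1) assms(7)] by linarith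
  have "\<mu>*(exp (-h) - 1) \<le> \<mu>*(-h + h\<^sup>2)"
    using e1 mu0 by (intro mult_left_mono) auto
  also have "\<dots> \<le> (lam*m)*(-h + h\<^sup>2)" using q assms by (intro mult_right_mono_neg) auto
  finally have a: "\<mu>*(exp (-h) - 1) \<le> (lam*m)*(-h + h\<^sup>2)" .
  have "(lam*m)*(-h + h\<^sup>2) + h*(lam*(m - T/2)) = lam*h*(m*h - T/2)"
    by (simp add: algebra_simps power2_eq_square)
  moreover have "lam*h*(m*h - T/2) \<le> lam*h*(-T/8)"
  proof (intro mult_left_mono)
    have "m*h \<le> (m+k)*h" using assms by (intro mult_right_mono) auto
    moreover have "T \<ge> 0"
    proof -
      have "0 \<le> (m+k)*h" using assms by (intro mult_nonneg_nonneg) auto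
      thus ?thesis using assms(5) by linarith
    qed
    ultimately show "m*h - T/2 \<le> -T/8" using assms by linarith
  qed (use assms in auto)
  ultimately show ?thesis using a by simp
qed



lemma binom_exp:
  fixes K :: real
  assumes lam: "lam > 0" and N: "N > 0" and l: "real lam \<ge> exp (-K) * real N / 4"
  shows "real ((2*N) choose lam) \<le> exp (real lam * (ln 8 + 1 + K))"
proof -
  have "real ((2*N) choose lam) \<le> (exp 1 * real (2*N) / real lam) ^ lam" by (rule binom_bound[OF lam])
  also have "\<dots> \<le> (exp (ln 8 + 1 + K)) ^ lam"
  proof (rule power_mono)
    have lpos: "real lam > 0" using lam by simp
    have "real N \<le> 4 * exp K * real lam"
    proof -
      have e: "exp K * exp (-K) = 1" by (simp add: exp_minus_inverse)
      have "real N / 4 = (exp K * exp (-K)) * real N / 4" using e by simp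
      also have "\<dots> = exp K * (exp (-K) * real N / 4)" by simp
      also have "\<dots> \<le> exp K * real lam" using l by (intro mult_left_mono) auto
      finally show ?thesis by simp
    qed
    hence "exp 1 * real (2*N) \<le> exp 1 * (8 * exp K * real lam)" by (simp add: mult_ac)
    hence "exp 1 * real (2*N) / real lam \<le> exp 1 * 8 * exp K" using lpos by (simp add: divide_le_eq mult_ac)
    also have "exp 1 * 8 * exp K = exp (ln 8 + 1 + K)" by (simp add: exp_add)
    finally show "exp 1 * real (2*N) / real lam \<le> exp (ln 8 + 1 + K)" .
    show "0 \<le> exp 1 * real (2*N) / real lam" by simp
  qed
  also have "\<dots> = exp (real lam * (ln 8 + 1 + K))" by (simp add: exp_of_nat_mult[symmetric])
  finally show ?thesis .
qed

lemma evA_bounds: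
  fixes r T h m K :: real
  assumes N: "N > 0" and k: "k \<ge> 1" and r: "r > 0"
    and M1: "r * real N \<le> real M" and M2: "real M \<le> r * real N + 1"
    and lam: "lam > 0" and l: "real lam \<ge> exp (-K) * real N / 4"
    and m: "m = real k * r / 2" and h: "h = T / (4 * (m + real k))" and h1: "h \<le> 1"
    and kT: "real k \<le> T / 8" and Q: "h * T / 8 \<ge> ln 8 + 2 + K"
  shows "real (card {\<Phi>\<in>formulas k N M. lam \<le> card {l\<in>lits N. real (deg k \<Phi> {0..<M} l) > m + T/2}})
           \<le> real (card (formulas k N M)) * exp (- real lam)"
    and "real (card {\<Phi>\<in>formulas k N M. lam \<le> card {l\<in>lits N. real (deg k \<Phi> {0..<M} l) < m - T/2}})
           \<le> real (card (formulas k N M)) * exp (- real lam)"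
proof -
  define \<mu> where "\<mu> = real (k*M) * (real lam / real (2*N))"
  define F where "F = real (card (formulas k N M))"
  have m0: "m \<ge> 0" unfolding m using r by (intro divide_nonneg_pos mult_nonneg_nonneg) auto
  have mk0: "m + real k > 0" using m0 k by simp
  have T0: "T \<ge> 0" using kT k by simp
  have h0: "h \<ge> 0" using h T0 mk0 by simp
  have hT: "(m + real k) * h = T / 4"
  proof -
    have "(m + real k) * h = T * (m + real k) / (4 * (m + real k))" by (simp add: h)
    also have "\<dots> = T / 4"
    proof -
      have "4 * m + 4 * real k \<noteq> 0" "m + real k \<noteq> 0" using mk0 by auto
      thus ?thesis by (simp add: field_simps)
    qed
    finally show ?thesis .
  qed
  have lam0: "real lam \<ge> 0" by simp
  have mu_eq: "\<mu> = real lam * (real k * real M / (2 * real N))" by (simp add: \<mu>_def)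
  have mu1: "real lam * m \<le> \<mu>"
  proof -
    have "real k * (r * real N) \<le> real k * real M" using M1 by (intro mult_left_mono) auto
    hence "real k * r / 2 \<le> real k * real M / (2 * real N)"
      using N by (simp add: field_simps)
    thus ?thesis unfolding mu_eq m by (intro mult_left_mono) auto
  qed
  have mu2: "\<mu> \<le> real lam * (m + real k)"
  proof -
    have "real M \<le> r * real N + 2 * real N" using M2 N by simp
    hence "real k * real M \<le> real k * (r * real N + 2 * real N)" by (intro mult_left_mono) auto
    hence "real k * real M / (2 * real N) \<le> real k * r / 2 + real k"
      using N by (simp add: field_simps)
    thus ?thesis unfolding mu_eq m by (intro mult_left_mono) auto
  qed
  have B: "real ((2*N) choose lam) \<le> exp (real lam * (ln 8 + 1 + K))" by (rule binom_exp[OF lam N l])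
  have fin: "exp (real lam * (ln 8 + 1 + K)) * (F * exp (-(real lam*h*T/8))) \<le> F * exp (- real lam)"
  proof -
    have "exp (real lam * (ln 8 + 1 + K)) * (F * exp (-(real lam*h*T/8))) = F * exp (real lam * (ln 8 + 1 + K) - real lam*h*T/8)"
    proof -
      have "exp (real lam * (ln 8 + 1 + K) - real lam*h*T/8) = exp (real lam * (ln 8 + 1 + K)) * exp (-(real lam*h*T/8))"
        by (simp only: exp_add[symmetric]) simp
      thus ?thesis by simp
    qed
    also have "\<dots> \<le> F * exp (- real lam)"
    proof (intro mult_left_mono)
      have "real lam * (ln 8 + 2 + K) \<le> real lam * (h*T/8)" using Q by (intro mult_left_mono) auto
      thus "exp (real lam * (ln 8 + 1 + K) - real lam*h*T/8) \<le> exp (- real lam)"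
        by (simp add: algebra_simps)
    qed (simp add: F_def)
    finally show ?thesis .
  qed
  show "real (card {\<Phi>\<in>formulas k N M. lam \<le> card {l\<in>lits N. real (deg k \<Phi> {0..<M} l) > m + T/2}})
           \<le> real (card (formulas k N M)) * exp (- real lam)"
  proof -
    have "real (card {\<Phi>\<in>formulas k N M. lam \<le> card {l\<in>lits N. real (deg k \<Phi> {0..<M} l) > m + T/2}})
       \<le> real ((2*N) choose lam) * (F * exp (\<mu> * (exp h - 1) - h * (real lam * (m + T/2))))"
      unfolding \<mu>_def F_def by (rule ev_up[OF N h0])
    also have "\<dots> \<le> exp (real lam * (ln 8 + 1 + K)) * (F * exp (-(real lam*h*T/8)))"
    proof (rule mult_mono)
      have "\<mu> * (exp h - 1) - h * (real lam * (m + T/2)) \<le> -(real lam*h*T/8)"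
        by (rule tail_up[OF lam0 h0 h1 mu1 mu2 hT kT m0])
      thus "F * exp (\<mu> * (exp h - 1) - h * (real lam * (m + T/2))) \<le> F * exp (-(real lam*h*T/8))"
        by (intro mult_left_mono) (auto simp: F_def)
    qed (use B in \<open>auto simp: F_def\<close>)
    also have "\<dots> \<le> F * exp (- real lam)" by (rule fin)
    finally show ?thesis by (simp add: F_def)
  qed
  show "real (card {\<Phi>\<in>formulas k N M. lam \<le> card {l\<in>lits N. real (deg k \<Phi> {0..<M} l) < m - T/2}})
           \<le> real (card (formulas k N M)) * exp (- real lam)"
  proof -
    have hn: "-h \<le> 0" using h0 by simp
    have "real (card {\<Phi>\<in>formulas k N M. lam \<le> card {l\<in>lits N. real (deg k \<Phi> {0..<M} l) < m - T/2}})
       \<le> real ((2*N) choose lam) * (F * exp (\<mu> * (exp (-h) - 1) - (-h) * (real lam * (m - T/2))))"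
      unfolding \<mu>_def F_def by (rule ev_dn[OF N hn])
    also have "\<dots> \<le> exp (real lam * (ln 8 + 1 + K)) * (F * exp (-(real lam*h*T/8)))"
    proof (rule mult_mono)
      have "\<mu> * (exp (-h) - 1) - (-h) * (real lam * (m - T/2)) \<le> -(real lam*h*T/8)"
        by (rule tail_dn[OF lam0 h0 h1 mu1 hT _ m0]) simp
      thus "F * exp (\<mu> * (exp (-h) - 1) - (-h) * (real lam * (m - T/2))) \<le> F * exp (-(real lam*h*T/8))"
        by (intro mult_left_mono) (auto simp: F_def)
    qed (use B in \<open>auto simp: F_def\<close>)
    also have "\<dots> \<le> F * exp (- real lam)" by (rule fin)
    finally show ?thesis by (simp add: F_def)
  qed
qed



lemma base_bound:
  fixes r T K \<beta> \<delta> :: real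
  assumes N: "N > 0" and k: "k \<ge> 1" and r: "r > 0" and M: "real M \<le> 2 * r * real N"
    and d: "\<delta> > 0" and s1: "real \<sigma> \<le> 2 * \<delta> * real N"
    and T: "T > 0" and rho: "real \<rho> \<ge> \<delta> * real N * T / (8 * real k)"
    and base: "64 * exp 1 * r * real k ^ 3 * \<delta> / T \<le> exp (-\<beta>)"
  shows "exp 1 * real M / real \<rho> * (real (k*k) * (real \<sigma> / real N)^2) \<le> exp (-\<beta>)"
proof -
  have Np: "real N > 0" using N by simp
  have kp: "real k > 0" using k by simp
  have rp: "0 < \<delta> * real N * T / (8 * real k)" using d Np T kp by simp
  have rhop: "real \<rho> > 0" using rho rp by linarith
  have "exp 1 * real M / real \<rho> * (real (k*k) * (real \<sigma> / real N)^2)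
      = exp 1 * real M * real k ^ 2 * real \<sigma> ^ 2 / (real \<rho> * real N ^ 2)"
    by (simp add: power2_eq_square field_simps)
  also have "\<dots> \<le> exp 1 * (2 * r * real N) * real k ^ 2 * (2 * \<delta> * real N) ^ 2 / (real \<rho> * real N ^ 2)"
  proof (intro divide_right_mono mult_mono mult_left_mono power_mono)
  qed (use M s1 r d Np rhop in auto)
  also have "\<dots> = 8 * exp 1 * r * real k ^ 2 * \<delta>^2 * real N / real \<rho>"
    using Np by (simp add: power2_eq_square field_simps)
  also have "\<dots> \<le> 8 * exp 1 * r * real k ^ 2 * \<delta>^2 * real N / (\<delta> * real N * T / (8 * real k))"
  proof (rule divide_left_mono)
    show "\<delta> * real N * T / (8 * real k) \<le> real \<rho>" by (rule rho)
    show "0 \<le> 8 * exp 1 * r * real k ^ 2 * \<delta>^2 * real N" using r d Np by simp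
    show "0 < real \<rho> * (\<delta> * real N * T / (8 * real k))" by (rule mult_pos_pos[OF rhop rp])
  qed
  also have "\<dots> = 64 * exp 1 * r * real k ^ 3 * \<delta> / T"
    using Np d kp T by (simp add: power2_eq_square power3_eq_cube field_simps)
  also have "\<dots> \<le> exp (-\<beta>)" by (rule base)
  finally show ?thesis .
qed

lemma evB_num:
  fixes r T K \<beta> \<delta> F :: real
  assumes N: "N > 0" and k: "k \<ge> 1" and r: "r > 0" and M: "real M \<le> 2 * r * real N"
    and dK: "\<delta> = exp (-K)" and K: "K \<ge> 0"
    and s0: "\<delta> * real N \<le> real \<sigma>" and s1: "real \<sigma> \<le> 2 * \<delta> * real N"
    and T: "T > 0" and rho: "real \<rho> \<ge> \<delta> * real N * T / (8 * real k)"
    and base: "64 * exp 1 * r * real k ^ 3 * \<delta> / T \<le> exp (-\<beta>)"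
    and beta: "\<beta> \<ge> 0" and bt: "\<beta> * T / (8 * real k) \<ge> 3 + 2 * K"
    and F: "F \<ge> 0"
  shows "real (N choose \<sigma>) * (real (M choose \<rho>) * (real (k*k) ^ \<rho> * (F * (real \<sigma> / real N) ^ (2*\<rho>))))
         \<le> F * exp (- (\<delta> * real N))"
proof -
  have Np: "real N > 0" using N by simp
  have kp: "real k > 0" using k by simp
  have d: "\<delta> > 0" using dK by simp
  have sp: "\<sigma> > 0" using s0 d Np by (metis mult_pos_pos of_nat_0_less_iff order_less_le_trans)
  have rp: "0 < \<delta> * real N * T / (8 * real k)" using d Np T kp by simp
  have rhop: "\<rho> > 0" using rho rp by (metis of_nat_0_less_iff order_less_le_trans)
  have a: "real (N choose \<sigma>) \<le> exp (2 * \<delta> * real N * (1 + K))"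
  proof -
    have "real (N choose \<sigma>) \<le> (exp 1 * real N / real \<sigma>) ^ \<sigma>" by (rule binom_bound[OF sp])
    also have "\<dots> \<le> exp (1 + K) ^ \<sigma>"
    proof (rule power_mono)
      have "real N \<le> real \<sigma> / \<delta>" using s0 d by (simp add: field_simps)
      hence "real N / real \<sigma> \<le> 1 / \<delta>" using sp by (simp add: field_simps)
      hence "exp 1 * (real N / real \<sigma>) \<le> exp 1 * (1 / \<delta>)" by (intro mult_left_mono) auto
      also have "exp 1 * (1 / \<delta>) = exp (1 + K)" by (simp add: dK exp_add exp_minus field_simps)
      finally show "exp 1 * real N / real \<sigma> \<le> exp (1 + K)" by simp
    qed simp
    also have "\<dots> = exp (real \<sigma> * (1 + K))" by (simp add: exp_of_nat_mult[symmetric])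
    also have "\<dots> \<le> exp (2 * \<delta> * real N * (1 + K))"
      using s1 K by (simp add: mult_right_mono)
    finally show ?thesis .
  qed
  have b: "real (M choose \<rho>) * (real (k*k) ^ \<rho> * (real \<sigma> / real N) ^ (2*\<rho>))
           \<le> exp (- (\<beta> * (\<delta> * real N * T / (8 * real k))))"
  proof -
    have "real (M choose \<rho>) * (real (k*k) ^ \<rho> * (real \<sigma> / real N) ^ (2*\<rho>))
          \<le> (exp 1 * real M / real \<rho>) ^ \<rho> * (real (k*k) ^ \<rho> * (real \<sigma> / real N) ^ (2*\<rho>))"
      by (intro mult_right_mono binom_bound[OF rhop]) auto
    also have "\<dots> = (exp 1 * real M / real \<rho>)^\<rho> * ((real (k*k))^\<rho> * ((real \<sigma> / real N)^2)^\<rho>)"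
      by (simp only: power_mult)
    also have "\<dots> = (exp 1 * real M / real \<rho> * (real (k*k) * (real \<sigma> / real N)^2)) ^ \<rho>"
      by (simp only: power_mult_distrib)
    also have "\<dots> \<le> exp (-\<beta>) ^ \<rho>"
      by (intro power_mono base_bound[OF N k r M d s1 T rho base]) auto
    also have "\<dots> = exp (- (\<beta> * real \<rho>))" by (simp add: exp_of_nat_mult[symmetric] mult.commute)
    also have "\<dots> \<le> exp (- (\<beta> * (\<delta> * real N * T / (8 * real k))))"
      using mult_left_mono[OF rho beta] by simp
    finally show ?thesis .
  qed
  have "real (N choose \<sigma>) * (real (M choose \<rho>) * (real (k*k) ^ \<rho> * (F * (real \<sigma> / real N) ^ (2*\<rho>))))
      = F * (real (N choose \<sigma>) * (real (M choose \<rho>) * (real (k*k) ^ \<rho> * (real \<sigma> / real N) ^ (2*\<rho>))))"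
    by (simp add: mult_ac)
  also have "\<dots> \<le> F * (exp (2 * \<delta> * real N * (1 + K)) * exp (- (\<beta> * (\<delta> * real N * T / (8 * real k)))))"
    by (intro mult_left_mono mult_mono a b F) auto
  also have "exp (2 * \<delta> * real N * (1 + K)) * exp (- (\<beta> * (\<delta> * real N * T / (8 * real k))))
      = exp (2 * \<delta> * real N * (1 + K) - (\<delta> * real N) * (\<beta> * T / (8 * real k)))"
    by (simp add: exp_add[symmetric] algebra_simps)
  also have "\<dots> \<le> exp (- (\<delta> * real N))"
  proof -
    have "(\<delta> * real N) * (3 + 2 * K) \<le> (\<delta> * real N) * (\<beta> * T / (8 * real k))"
      using bt d Np by (intro mult_left_mono) auto
    thus ?thesis by (simp add: algebra_simps)
  qed
  finally show ?thesis using F by (simp add: mult_left_mono)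
qed



lemma enlarge:
  assumes "finite A" "S \<subseteq> A" "card S \<le> n" "n \<le> card A"
  shows "\<exists>S''. S \<subseteq> S'' \<and> S'' \<subseteq> A \<and> card S'' = n"
proof -
  have fS: "finite S" by (rule finite_subset[OF assms(2,1)])
  have "card (A - S) = card A - card S" using assms fS by (simp add: card_Diff_subset)
  hence "n - card S \<le> card (A - S)" using assms by linarith
  then obtain X where X: "X \<subseteq> A - S" "card X = n - card S" "finite X"
    by (rule obtain_subset_with_card_n)
  have "card (S \<union> X) = card S + card X" using X fS by (intro card_Un_disjoint) auto
  hence "card (S \<union> X) = n" using X assms by simp
  thus ?thesis using X assms by (intro exI[of _ "S \<union> X"]) auto
qed

lemma inclusion:
  fixes r T \<delta> :: real and k N M lam s \<sigma> \<rho> :: nat and \<Phi> :: cnf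
  assumes T: "T = real k ^ 3 * 2 powr (real k / 2)" and k: "k \<ge> 1"
    and \<Phi>: "\<Phi> \<in> formulas k N M"
    and big: "\<not> real (card (removed_vars k r N M \<Phi>)) \<le> \<delta> * real N"
    and up: "\<not> lam \<le> card {l\<in>lits N. real (deg k \<Phi> {0..<M} l) > real k * r / 2 + T/2}"
    and dn: "\<not> lam \<le> card {l\<in>lits N. real (deg k \<Phi> {0..<M} l) < real k * r / 2 - T/2}"
    and lam: "2 * real lam - 2 < \<delta> * real N / 2"
    and s1: "1 \<le> s" and s2: "real s \<le> \<delta> * real N / 2" and s3: "\<delta> * real N / 4 \<le> real s"
    and sig1: "\<delta> * real N \<le> real \<sigma>" and sig2: "\<sigma> \<le> N"
    and rho: "\<rho> = nat \<lceil>\<delta> * real N * T / (8 * real k)\<rceil>"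
  shows "\<Phi> \<in> EvB k N M \<sigma> \<rho>"
proof -
  define m where "m = real k * r / 2"
  define Dup where "Dup = {l\<in>lits N. real (deg k \<Phi> {0..<M} l) > m + T/2}"
  define Ddn where "Ddn = {l\<in>lits N. real (deg k \<Phi> {0..<M} l) < m - T/2}"
  have cu: "card Dup < lam" using up by (simp add: Dup_def m_def)
  have cd: "card Ddn < lam" using dn by (simp add: Ddn_def m_def)
  have fD: "finite (Dup \<union> Ddn)" by (rule finite_subset[of _ "lits N"]) (auto simp: Dup_def Ddn_def)
  have bsub: "badset k r N M \<Phi> T \<subseteq> fst ` (Dup \<union> Ddn)"
  proof
    fix x assume "x \<in> badset k r N M \<Phi> T"
    then obtain b where x: "x < N" "\<bar>real (deg k \<Phi> {0..<M} (x,b)) - m\<bar> > T / 2"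
      by (auto simp: badset_def m_def)
    have "(x,b) \<in> lits N" using x by (simp add: lits_def)
    hence "(x,b) \<in> Dup \<union> Ddn" using x(2) by (auto simp: Dup_def Ddn_def abs_if split: if_splits)
    thus "x \<in> fst ` (Dup \<union> Ddn)" by force
  qed
  have "card (badset k r N M \<Phi> T) \<le> card (fst ` (Dup \<union> Ddn))"
    by (intro card_mono bsub) (use fD in auto)
  also have "\<dots> \<le> card (Dup \<union> Ddn)" by (rule card_image_le[OF fD])
  also have "\<dots> \<le> card Dup + card Ddn" by (rule card_Un_le)
  finally have "card (badset k r N M \<Phi> T) \<le> 2 * lam - 2" using cu cd by linarith
  hence g: "real (card (badset k r N M \<Phi> T)) \<le> 2 * real lam - 2" using cu by linarith
  have "real (s + card (badset k r N M \<Phi> T)) < real (card (removed_vars k r N M \<Phi>))"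
    using g s2 lam big by simp
  hence "s + card (badset k r N M \<Phi> T) < card (removed_vars k r N M \<Phi>)" by linarith
  from det[OF T s1 this] obtain S' R where S': "S' \<subseteq> {0..<N}" "card S' \<le> s + card (badset k r N M \<Phi> T)"
    and R: "R \<subseteq> {0..<M}" "real s * T / 2 < real k * real (card R)"
    and hv: "\<forall>i\<in>R. 2 \<le> card {j. j < k \<and> fst (\<Phi> (i,j)) \<in> S'}" by blast
  have "real (card S') \<le> real \<sigma>" using S'(2) g s2 sig1 lam by linarith
  hence "card S' \<le> \<sigma>" by linarith
  then obtain S'' where S'': "S' \<subseteq> S''" "S'' \<subseteq> {0..<N}" "card S'' = \<sigma>"
    using enlarge[of "{0..<N}" S' \<sigma>] S' sig2 by auto
  have kp: "real k > 0" using k by simp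
  have T0: "T \<ge> 0" using T by simp
  have "\<delta> * real N * T / 8 \<le> real s * T / 2"
  proof -
    have "(\<delta> * real N / 4) * T \<le> real s * T" using s3 T0 by (intro mult_right_mono) auto
    moreover have "(\<delta> * real N / 4) * T = \<delta> * real N * T / 4" by (simp add: algebra_simps)
    ultimately show ?thesis by linarith
  qed
  hence "\<delta> * real N * T / 8 < real k * real (card R)" using R(2) by linarith
  hence "\<delta> * real N * T / (8 * real k) < real (card R)" using kp by (simp add: field_simps)
  hence "\<rho> \<le> card R" using rho by (simp add: nat_le_iff ceiling_le_iff)
  then obtain R' where R': "R' \<subseteq> R" "card R' = \<rho>"
    by (rule obtain_subset_with_card_n) auto
  have "\<forall>i\<in>R'. 2 \<le> card {j. j < k \<and> fst (\<Phi> (i,j)) \<in> S''}"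
  proof
    fix i assume "i \<in> R'"
    hence "2 \<le> card {j. j < k \<and> fst (\<Phi> (i,j)) \<in> S'}" using hv R' by blast
    also have "\<dots> \<le> card {j. j < k \<and> fst (\<Phi> (i,j)) \<in> S''}" by (rule card_pos_mono[OF S''(1)])
    finally show "2 \<le> card {j. j < k \<and> fst (\<Phi> (i,j)) \<in> S''}" .
  qed
  thus ?thesis unfolding EvB_def using \<Phi> S'' R' R(1) by blast
qed



lemma nat_ceil: "x \<ge> 0 \<Longrightarrow> x \<le> real (nat \<lceil>x\<rceil>) \<and> real (nat \<lceil>x\<rceil>) < x + 1"
  by (simp add: ceiling_correct) (use ceiling_correct[of x] in linarith)

lemma nat_floor: "x \<ge> 0 \<Longrightarrow> real (nat \<lfloor>x\<rfloor>) \<le> x \<and> x < real (nat \<lfloor>x\<rfloor>) + 1"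
  by simp

lemma prob_N:
  fixes k N :: nat and r T m K \<delta> h \<beta> :: real
  assumes T: "T = real k ^ 3 * 2 powr (real k / 2)" and m: "m = real k * r / 2"
    and K: "K = real k ^ 3" and d: "\<delta> = exp (- K)" and h: "h = T / (4 * (m + real k))"
    and k: "k \<ge> 1" and N: "N > 0" and r: "r > 0" and rN: "r * real N \<ge> 1"
    and h1: "h \<le> 1" and kT: "real k \<le> T / 8" and Q: "h * T / 8 \<ge> ln 8 + 2 + K"
    and base: "64 * exp 1 * r * real k ^ 3 * \<delta> / T \<le> exp (-\<beta>)"
    and beta: "\<beta> \<ge> 0" and bt: "\<beta> * T / (8 * real k) \<ge> 3 + 2 * K"
    and dN: "\<delta> * real N \<ge> 4"
  shows "measure_pmf.prob (random_formula k N (nat \<lceil>r * real N\<rceil>))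
           {\<Phi>. real (card (removed_vars k r N (nat \<lceil>r * real N\<rceil>) \<Phi>)) \<le> \<delta> * real N}
         \<ge> 1 - 3 * exp (- (\<delta> * real N / 4))"
proof -
  define M where "M = nat \<lceil>r * real N\<rceil>"
  define F where "F = formulas k N M"
  define G where "G = {\<Phi>. real (card (removed_vars k r N M \<Phi>)) \<le> \<delta> * real N}"
  define lam where "lam = nat \<lceil>\<delta> * real N / 4\<rceil>"
  define s where "s = nat \<lfloor>\<delta> * real N / 2\<rfloor>"
  define \<sigma> where "\<sigma> = nat \<lceil>\<delta> * real N\<rceil>"
  define \<rho> where "\<rho> = nat \<lceil>\<delta> * real N * T / (8 * real k)\<rceil>"
  define EvUp where "EvUp = {\<Phi>\<in>formulas k N M. lam \<le> card {l\<in>lits N. real (deg k \<Phi> {0..<M} l) > m + T/2}}"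
  define EvDn where "EvDn = {\<Phi>\<in>formulas k N M. lam \<le> card {l\<in>lits N. real (deg k \<Phi> {0..<M} l) < m - T/2}}"
  have Np: "real N > 0" using N by simp
  have K0: "K \<ge> 0" using K by simp
  have d0: "\<delta> > 0" using d by simp
  have d1: "\<delta> \<le> 1" using d K0 by simp
  have T0: "T > 0" using T k by simp
  have M1: "r * real N \<le> real M" "real M < r * real N + 1"
    using nat_ceil[of "r * real N"] r Np unfolding M_def by auto
  have M2: "real M \<le> 2 * r * real N" using M1 rN by linarith
  have l1: "\<delta> * real N / 4 \<le> real lam" "real lam < \<delta> * real N / 4 + 1"
    using nat_ceil[of "\<delta> * real N / 4"] d0 Np unfolding lam_def by auto
  have lam0: "lam > 0"
  proof -
    have "\<delta> * real N / 4 > 0" using d0 Np by simp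
    hence "real lam > 0" using l1 by linarith
    thus ?thesis by simp
  qed
  have s12: "real s \<le> \<delta> * real N / 2" "\<delta> * real N / 2 < real s + 1"
    using nat_floor[of "\<delta> * real N / 2"] d0 Np unfolding s_def by auto
  have s1: "1 \<le> s" using s12 dN by linarith
  have s3: "\<delta> * real N / 4 \<le> real s" using s12 dN by linarith
  have sg: "\<delta> * real N \<le> real \<sigma>" "real \<sigma> < \<delta> * real N + 1"
    using nat_ceil[of "\<delta> * real N"] d0 Np unfolding \<sigma>_def by auto
  have sg2: "real \<sigma> \<le> 2 * \<delta> * real N" using sg dN by linarith
  have sgN: "\<sigma> \<le> N"
  proof -
    have a: "\<delta> * real N \<le> real N" using d1 Np by (simp add: mult_le_cancel_right1)
    thus ?thesis unfolding \<sigma>_def using a by simp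
  qed
  have rho1: "real \<rho> \<ge> \<delta> * real N * T / (8 * real k)"
    using nat_ceil[of "\<delta> * real N * T / (8 * real k)"] d0 Np T0 k unfolding \<rho>_def by auto
  have finF: "finite F" by (simp add: F_def)
  have cFp: "card F > 0" using N by (simp add: F_def card_formulas)
  have neF: "F \<noteq> {}" using cFp by auto
  have cF0: "real (card F) > 0" using finF neF by (simp add: card_gt_0_iff)
  have sub: "F - G \<subseteq> EvUp \<union> EvDn \<union> EvB k N M \<sigma> \<rho>"
  proof
    fix \<Phi> assume \<Phi>: "\<Phi> \<in> F - G"
    show "\<Phi> \<in> EvUp \<union> EvDn \<union> EvB k N M \<sigma> \<rho>"
    proof (cases "\<Phi> \<in> EvUp \<or> \<Phi> \<in> EvDn")
      case True thus ?thesis by blast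
    next
      case False
      have "\<Phi> \<in> EvB k N M \<sigma> \<rho>"
      proof (rule inclusion[OF T k])
        show "\<Phi> \<in> formulas k N M" using \<Phi> by (simp add: F_def)
        show "\<not> real (card (removed_vars k r N M \<Phi>)) \<le> \<delta> * real N" using \<Phi> by (simp add: G_def)
        show "\<not> lam \<le> card {l\<in>lits N. real (deg k \<Phi> {0..<M} l) > real k * r / 2 + T/2}"
          using False \<Phi> by (simp add: EvUp_def F_def m)
        show "\<not> lam \<le> card {l\<in>lits N. real (deg k \<Phi> {0..<M} l) < real k * r / 2 - T/2}"
          using False \<Phi> by (simp add: EvDn_def F_def m)
        show "2 * real lam - 2 < \<delta> * real N / 2" using l1 by linarith
        show "1 \<le> s" by (rule s1)
        show "real s \<le> \<delta> * real N / 2" using s12 by simp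
        show "\<delta> * real N / 4 \<le> real s" by (rule s3)
        show "\<delta> * real N \<le> real \<sigma>" using sg by simp
        show "\<sigma> \<le> N" by (rule sgN)
        show "\<rho> = nat \<lceil>\<delta> * real N * T / (8 * real k)\<rceil>" by (simp add: \<rho>_def)
      qed
      thus ?thesis by blast
    qed
  qed
  have bUp: "real (card EvUp) \<le> real (card F) * exp (- real lam)"
    and bDn: "real (card EvDn) \<le> real (card F) * exp (- real lam)"
    unfolding EvUp_def EvDn_def F_def
    by (rule evA_bounds[OF N k r M1(1) less_imp_le[OF M1(2)] lam0 _ m h h1 kT Q]; use l1 d in simp)+
  have bB: "real (card (EvB k N M \<sigma> \<rho>)) \<le> real (card F) * exp (- (\<delta> * real N))"
  proof -
    have "real (card (EvB k N M \<sigma> \<rho>)) \<le> real (N choose \<sigma>) * (real (M choose \<rho>) *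
       (real (k*k) ^ \<rho> * (real (card (formulas k N M)) * (real \<sigma> / real N) ^ (2*\<rho>))))"
      by (rule evB_bound[OF N])
    also have "\<dots> \<le> real (card F) * exp (- (\<delta> * real N))"
      unfolding F_def by (rule evB_num[OF N k r M2 d K0 sg(1) sg2 T0 rho1 base beta bt]) simp
    finally show ?thesis .
  qed
  have e1: "exp (- real lam) \<le> exp (- (\<delta> * real N / 4))" using l1 by simp
  have e2: "exp (- (\<delta> * real N)) \<le> exp (- (\<delta> * real N / 4))" using d0 Np by simp
  have "F = (F \<inter> G) \<union> (F - G)" by blast
  hence c1: "card F \<le> card (F \<inter> G) + card (F - G)" by (metis card_Un_le)
  have c2: "card (F - G) \<le> card (EvUp \<union> EvDn \<union> EvB k N M \<sigma> \<rho>)"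
    by (intro card_mono sub) (auto simp: EvUp_def EvDn_def EvB_def)
  have c3: "card (EvUp \<union> EvDn \<union> EvB k N M \<sigma> \<rho>) \<le> card (EvUp \<union> EvDn) + card (EvB k N M \<sigma> \<rho>)"
    by (rule card_Un_le)
  have c4: "card (EvUp \<union> EvDn) \<le> card EvUp + card EvDn" by (rule card_Un_le)
  have "real (card F) \<le> real (card (F \<inter> G)) + real (card EvUp) + real (card EvDn) + real (card (EvB k N M \<sigma> \<rho>))"
    using c1 c2 c3 c4 by linarith
  moreover have "real (card F) * exp (- real lam) \<le> real (card F) * exp (- (\<delta> * real N / 4))"
    using e1 by (intro mult_left_mono) auto
  moreover have "real (card F) * exp (- (\<delta> * real N)) \<le> real (card F) * exp (- (\<delta> * real N / 4))"
    using e2 by (intro mult_left_mono) auto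
  moreover have "real (card F) * (1 - 3 * exp (- (\<delta> * real N / 4))) = real (card F) - 3 * (real (card F) * exp (- (\<delta> * real N / 4)))"
    by (simp add: algebra_simps)
  ultimately have "real (card F) * (1 - 3 * exp (- (\<delta> * real N / 4))) \<le> real (card (F \<inter> G))"
    using bUp bDn bB by linarith
  hence "1 - 3 * exp (- (\<delta> * real N / 4)) \<le> real (card (F \<inter> G)) / real (card F)"
    using cF0 by (simp add: field_simps)
  also have "real (card (F \<inter> G)) / real (card F) = measure_pmf.prob (random_formula k N M) G"
    unfolding random_formula_def using measure_pmf_of_set[OF neF finF, of G] by (simp add: F_def)
  finally show ?thesis by (simp add: M_def G_def)
qed



lemma lower_lim: "d > 0 \<Longrightarrow> (\<lambda>N::nat. 1 - 3 * exp (- (d * real N / 4))) \<longlonglongrightarrow> 1"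
  by real_asymp

lemma main_k:
  fixes k :: nat and r :: real
  defines "T \<equiv> real k ^ 3 * 2 powr (real k / 2)"
  assumes k: "k \<ge> 1" and k12: "(2::real) ^ k \<ge> 12"
    and r1: "2 ^ k / 2 \<le> r" and r2: "r \<le> 2 * 2 ^ k"
    and P3: "T \<le> real k * 2 ^ k" and P4: "8 * real k \<le> T"
    and P5: "T^2 / (64 * real k * 2 ^ k) \<ge> ln 8 + 2 + real k ^ 3"
    and P6: "128 * exp 1 * 2 ^ k * real k ^ 3 * exp (- (real k ^ 3)) / T \<le> exp (- (real k ^ 3 - real k - 6))"
    and P7: "real k ^ 3 - real k - 6 \<ge> 0"
    and P8: "(real k ^ 3 - real k - 6) * T / (8 * real k) \<ge> 3 + 2 * real k ^ 3"
  shows "(\<lambda>N. measure_pmf.prob (random_formula k N (nat \<lceil>r * real N\<rceil>))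
           {\<Phi>. real (card (removed_vars k r N (nat \<lceil>r * real N\<rceil>) \<Phi>)) \<le> exp (- (real k ^ 3)) * real N})
         \<longlonglongrightarrow> 1"
proof -
  define m where "m = real k * r / 2"
  define K where "K = real k ^ 3"
  define \<delta> where "\<delta> = exp (- K)"
  define h where "h = T / (4 * (m + real k))"
  define \<beta> where "\<beta> = real k ^ 3 - real k - 6"
  have kp: "real k > 0" using k by simp
  have Teq: "T = real k ^ 3 * 2 powr (real k / 2)" by (simp add: T_def)
  have p2: "(2::real) ^ k > 0" by simp
  have T0: "T > 0" using k by (simp add: T_def)
  have rpos: "r \<ge> 1" using r1 k12 by linarith
  have m1: "m \<ge> real k * 2 ^ k / 4"
  proof -
    have "real k * (2 ^ k / 2) \<le> real k * r" by (rule mult_left_mono[OF r1]) simp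
    thus ?thesis unfolding m_def by simp
  qed
  have m2: "m \<le> real k * 2 ^ k"
  proof -
    have "real k * r \<le> real k * (2 * 2 ^ k)" by (rule mult_left_mono[OF r2]) simp
    thus ?thesis unfolding m_def by simp
  qed
  have mk0: "m + real k > 0"
  proof -
    have "real k * 2 ^ k / 4 > 0" using kp by simp
    thus ?thesis using m1 kp by linarith
  qed
  have h1: "h \<le> 1"
  proof -
    have "4 * m \<ge> real k * 2 ^ k" using m1 by simp
    hence "T \<le> 4 * (m + real k)" using P3 kp by (simp add: algebra_simps)
    thus ?thesis unfolding h_def using mk0 by simp
  qed
  have kT: "real k \<le> T / 8" using P4 by simp
  have Q: "h * T / 8 \<ge> ln 8 + 2 + K"
  proof -
    have a: "m + real k \<le> 2 * (real k * 2 ^ k)"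
    proof -
      have "real k * 1 \<le> real k * 2 ^ k" using kp by (intro mult_left_mono) auto
      thus ?thesis using m2 by simp
    qed
    have "h * T / 8 = T^2 / (32 * (m + real k))" unfolding h_def by (simp add: power2_eq_square)
    also have "\<dots> \<ge> T^2 / (32 * (2 * (real k * 2 ^ k)))"
      using a mk0 by (intro divide_left_mono) auto
    finally have "h * T / 8 \<ge> T^2 / (64 * real k * 2 ^ k)" by (simp add: mult_ac)
    thus ?thesis using P5 unfolding K_def by linarith
  qed
  have base: "64 * exp 1 * r * real k ^ 3 * \<delta> / T \<le> exp (- \<beta>)"
  proof -
    have "64 * exp 1 * r * real k ^ 3 * \<delta> / T \<le> 64 * exp 1 * (2 * 2 ^ k) * real k ^ 3 * \<delta> / T"
      using r2 T0 by (intro divide_right_mono mult_right_mono mult_left_mono) (auto simp: \<delta>_def)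
    also have "\<dots> = 128 * exp 1 * 2 ^ k * real k ^ 3 * exp (- (real k ^ 3)) / T"
      by (simp add: \<delta>_def K_def)
    also have "\<dots> \<le> exp (- \<beta>)" using P6 by (simp add: \<beta>_def)
    finally show ?thesis .
  qed
  have beta: "\<beta> \<ge> 0" using P7 by (simp add: \<beta>_def)
  have bt: "\<beta> * T / (8 * real k) \<ge> 3 + 2 * K" using P8 by (simp add: \<beta>_def K_def)
  have d0: "\<delta> > 0" by (simp add: \<delta>_def)
  define N0 where "N0 = max 1 (nat \<lceil>4 / \<delta>\<rceil>)"
  have ev: "eventually (\<lambda>N. 1 - 3 * exp (- (\<delta> * real N / 4)) \<le>
      measure_pmf.prob (random_formula k N (nat \<lceil>r * real N\<rceil>))
           {\<Phi>. real (card (removed_vars k r N (nat \<lceil>r * real N\<rceil>) \<Phi>)) \<le> exp (- (real k ^ 3)) * real N}) sequentially"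
    unfolding eventually_sequentially
  proof (intro exI allI impI)
    fix N assume N: "N0 \<le> N"
    have N1: "N > 0" using N by (simp add: N0_def)
    have "4 / \<delta> \<le> real N"
    proof -
      have "4 / \<delta> \<le> real (nat \<lceil>4 / \<delta>\<rceil>)" by (simp add: real_nat_ceiling_ge)
      also have "\<dots> \<le> real N" using N by (simp add: N0_def)
      finally show ?thesis .
    qed
    hence dN: "\<delta> * real N \<ge> 4" using d0 by (simp add: field_simps)
    have rN: "r * real N \<ge> 1"
    proof -
      have "1 * 1 \<le> r * real N" using rpos N1 by (intro mult_mono) auto
      thus ?thesis by simp
    qed
    have "measure_pmf.prob (random_formula k N (nat \<lceil>r * real N\<rceil>))
           {\<Phi>. real (card (removed_vars k r N (nat \<lceil>r * real N\<rceil>) \<Phi>)) \<le> \<delta> * real N}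
         \<ge> 1 - 3 * exp (- (\<delta> * real N / 4))"
      by (rule prob_N[OF Teq m_def K_def \<delta>_def h_def k N1 _ rN h1 kT Q base beta bt dN]) (use rpos in simp)
    thus "1 - 3 * exp (- (\<delta> * real N / 4)) \<le>
      measure_pmf.prob (random_formula k N (nat \<lceil>r * real N\<rceil>))
           {\<Phi>. real (card (removed_vars k r N (nat \<lceil>r * real N\<rceil>) \<Phi>)) \<le> exp (- (real k ^ 3)) * real N}"
      by (simp add: \<delta>_def K_def)
  qed
  have ev2: "eventually (\<lambda>N. measure_pmf.prob (random_formula k N (nat \<lceil>r * real N\<rceil>))
           {\<Phi>. real (card (removed_vars k r N (nat \<lceil>r * real N\<rceil>) \<Phi>)) \<le> exp (- (real k ^ 3)) * real N} \<le> 1) sequentially"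
    by (simp add: measure_pmf.prob_le_1)
  show ?thesis
    by (rule tendsto_sandwich[OF ev ev2 lower_lim[OF d0] tendsto_const])
qed



theorem lemmaB3:
  fixes eps :: "nat \<Rightarrow> real"
  assumes "eps \<in> \<Theta>(\<lambda>k. 2 powr (- real k / 3))"
  shows "\<exists>k0. \<forall>k\<ge>k0.
    ((\<lambda>N. measure_pmf.prob
        (random_formula k N (nat \<lceil>(2 ^ k * ln 2 - (1 + ln 2) / 2 - eps k) * real N\<rceil>))
        {\<Phi>. real (card (removed_vars k (2 ^ k * ln 2 - (1 + ln 2) / 2 - eps k) N
                (nat \<lceil>(2 ^ k * ln 2 - (1 + ln 2) / 2 - eps k) * real N\<rceil>) \<Phi>))
             \<le> exp (- (real k ^ 3)) * real N})
     \<longlonglongrightarrow> 1)"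
proof -
  have "eps \<in> O(\<lambda>k. 2 powr (- real k / 3))" using assms by (rule bigthetaD1)
  moreover have "(\<lambda>k::nat. 2 powr (- real k / 3)) \<in> o(\<lambda>_. 1)" by real_asymp
  ultimately have "eps \<in> o(\<lambda>_. 1)" by (rule landau_o.big_small_trans)
  hence E0: "eventually (\<lambda>k. \<bar>eps k\<bar> \<le> 1) at_top"
    using landau_o.smallD[of eps at_top "\<lambda>_. 1" 1] by simp
  have E1: "eventually (\<lambda>k::nat. k \<ge> 1) at_top" by (rule eventually_ge_at_top)
  have E2: "eventually (\<lambda>k::nat. (2::real) ^ k \<ge> 12) at_top" by real_asymp
  have E3: "eventually (\<lambda>k::nat. (2::real) ^ k * (2/3) - 2 \<ge> 2 ^ k / 2) at_top" by real_asymp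
  have P3: "eventually (\<lambda>k::nat. real k ^ 3 * 2 powr (real k / 2) \<le> real k * 2^k) at_top" by real_asymp
  have P4: "eventually (\<lambda>k::nat. 8 * real k \<le> real k ^ 3 * 2 powr (real k / 2)) at_top" by real_asymp
  have P5: "eventually (\<lambda>k::nat. (real k ^ 3 * 2 powr (real k / 2))^2 / (64 * real k * 2 ^ k) \<ge> ln 8 + 2 + real k ^ 3) at_top"
    by real_asymp
  have P6: "eventually (\<lambda>k::nat. 128 * exp 1 * 2 ^ k * real k ^ 3 * exp (- (real k ^ 3)) / (real k ^ 3 * 2 powr (real k / 2))
      \<le> exp (- (real k ^ 3 - real k - 6))) at_top" by real_asymp
  have P7: "eventually (\<lambda>k::nat. real k ^ 3 - real k - 6 \<ge> 0) at_top" by real_asymp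
  have P8: "eventually (\<lambda>k::nat. (real k ^ 3 - real k - 6) * (real k ^ 3 * 2 powr (real k / 2)) / (8 * real k) \<ge> 3 + 2 * real k ^ 3) at_top"
    by real_asymp
  have "eventually (\<lambda>k. \<bar>eps k\<bar> \<le> 1 \<and> k \<ge> 1 \<and> (2::real) ^ k \<ge> 12 \<and> (2::real) ^ k * (2/3) - 2 \<ge> 2 ^ k / 2
     \<and> real k ^ 3 * 2 powr (real k / 2) \<le> real k * 2^k
     \<and> 8 * real k \<le> real k ^ 3 * 2 powr (real k / 2)
     \<and> (real k ^ 3 * 2 powr (real k / 2))^2 / (64 * real k * 2 ^ k) \<ge> ln 8 + 2 + real k ^ 3
     \<and> 128 * exp 1 * 2 ^ k * real k ^ 3 * exp (- (real k ^ 3)) / (real k ^ 3 * 2 powr (real k / 2))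
           \<le> exp (- (real k ^ 3 - real k - 6))
     \<and> real k ^ 3 - real k - 6 \<ge> 0
     \<and> (real k ^ 3 - real k - 6) * (real k ^ 3 * 2 powr (real k / 2)) / (8 * real k) \<ge> 3 + 2 * real k ^ 3) at_top"
    using E0 E1 E2 E3 P3 P4 P5 P6 P7 P8 by (intro eventually_conj) auto
  then obtain k0 where k0: "\<And>k. k \<ge> k0 \<Longrightarrow> \<bar>eps k\<bar> \<le> 1 \<and> k \<ge> 1 \<and> (2::real) ^ k \<ge> 12 \<and> (2::real) ^ k * (2/3) - 2 \<ge> 2 ^ k / 2
     \<and> real k ^ 3 * 2 powr (real k / 2) \<le> real k * 2^k
     \<and> 8 * real k \<le> real k ^ 3 * 2 powr (real k / 2)
     \<and> (real k ^ 3 * 2 powr (real k / 2))^2 / (64 * real k * 2 ^ k) \<ge> ln 8 + 2 + real k ^ 3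
     \<and> 128 * exp 1 * 2 ^ k * real k ^ 3 * exp (- (real k ^ 3)) / (real k ^ 3 * 2 powr (real k / 2))
           \<le> exp (- (real k ^ 3 - real k - 6))
     \<and> real k ^ 3 - real k - 6 \<ge> 0
     \<and> (real k ^ 3 - real k - 6) * (real k ^ 3 * 2 powr (real k / 2)) / (8 * real k) \<ge> 3 + 2 * real k ^ 3"
    unfolding eventually_at_top_linorder by blast
  show ?thesis
  proof (intro exI allI impI)
    fix k assume "k0 \<le> k"
    note c = k0[OF this]
    have ce: "eps k \<le> 1" "- 1 \<le> eps k" using c by (auto simp: abs_le_iff)
    have c4: "(2::real) ^ k * (2/3) - 2 \<ge> 2 ^ k / 2" using c by auto
    define r where "r = 2 ^ k * ln 2 - (1 + ln 2) / 2 - eps k"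
    have l1: "2/3 \<le> ln (2::real)" by (rule ln2_ge_two_thirds)
    have l2: "ln (2::real) < 1" by (rule ln_2_less_1)
    have l0: "ln (2::real) > 0" by simp
    have r1: "2 ^ k / 2 \<le> r"
    proof -
      have "(2::real) ^ k * (2/3) \<le> 2 ^ k * ln 2" using l1 by (intro mult_left_mono) auto
      moreover have "\<And>(X::real) (Y::real) (L::real) (e::real). X * (2/3) \<le> Y \<Longrightarrow> e \<le> 1 \<Longrightarrow> X / 2 \<le> X * (2/3) - 2 \<Longrightarrow> L < 1
          \<Longrightarrow> X / 2 \<le> Y - (1 + L) / 2 - e" by (simp add: field_simps)
      ultimately show ?thesis using ce c4 l2 unfolding r_def by blast
    qed
    have r2: "r \<le> 2 * 2 ^ k"
    proof -
      have "(2::real) ^ k * ln 2 \<le> 2 ^ k * 1" using l2 by (intro mult_left_mono) auto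
      moreover have "(1::real) \<le> 2 ^ k" by simp
      moreover have "\<And>(X::real) (Y::real) (L::real) (e::real). Y \<le> X * 1 \<Longrightarrow> 1 \<le> X \<Longrightarrow> -1 \<le> e \<Longrightarrow> 0 < L
          \<Longrightarrow> Y - (1 + L) / 2 - e \<le> 2 * X" by (simp add: field_simps)
      ultimately show ?thesis using ce l0 unfolding r_def by blast
    qed
    have "(\<lambda>N. measure_pmf.prob (random_formula k N (nat \<lceil>r * real N\<rceil>))
           {\<Phi>. real (card (removed_vars k r N (nat \<lceil>r * real N\<rceil>) \<Phi>)) \<le> exp (- (real k ^ 3)) * real N})
         \<longlonglongrightarrow> 1"
      by (rule main_k) (use c r1 r2 in auto)
    thus "((\<lambda>N. measure_pmf.prob
        (random_formula k N (nat \<lceil>(2 ^ k * ln 2 - (1 + ln 2) / 2 - eps k) * real N\<rceil>))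
        {\<Phi>. real (card (removed_vars k (2 ^ k * ln 2 - (1 + ln 2) / 2 - eps k) N
                (nat \<lceil>(2 ^ k * ln 2 - (1 + ln 2) / 2 - eps k) * real N\<rceil>) \<Phi>))
             \<le> exp (- (real k ^ 3)) * real N})
     \<longlonglongrightarrow> 1)" by (simp add: r_def)
  qed
qed


end
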